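(* Let $F$ be $(\ell,\omega)$-relatively smooth on $\mathcal X\cap\mathcal S$ for some $\ell>0$, and let the stochastic oracle satisfy, for every $x\in\mathcal X$, $\mathbb{E}_{\xi}[\nabla f(x,\xi)]=\nabla F(x)$ and $\mathbb{E}_{\xi}\big[\|\nabla f(x,\xi)-\nabla F(x)\|_*^2\big]\le\sigma^2$. Run Stochastic Mirror Descent from $x_0\in\mathcal X\cap\mathcal S$: $$x_{t+1}=\arg\min_{x\in\mathcal X}\ \eta_t\big(\langle\nabla f(x_t,\xi_t),x\rangle+r(x)\big)+D_\omega(x,x_t),$$ with $\xi_0,\xi_1,\dots$ i.i.d. samples from $P$ and a non-increasing step-size sequence $\{\eta_t\}_{t\ge0}$ with $\eta_0\le 1/(2\ell)$. Let $\bar x_T$ be chosen from $x_0,\dots,x_{T-1}$ with probabilities $p_t=\eta_t/\sum_{s=0}^{T-1}\eta_s$. Then $$\mathbb{E}\big[\mathcal D_{3\ell}(\bar x_T)\big]\le\frac{3\lambda_0+6\ell\sigma^2\sum_{t=0}^{T-1}\eta_t^2}{\sum_{t=0}^{T-1}\eta_t},$$ where $\lambda_0:=\Phi_{1/\rho}(x_0)-\Phi^*+\Phi(x_0)-\Phi^*$ with $\rho=2\ell$. Moreover, with constant step-size $\eta_t=\min\{\frac{1}{2\ell},\sqrt{\lambda_0/(\sigma^2\ell T)}\}$, $$\mathbb{E}\big[\mathcal D_{3\ell}(\bar x_T)\big]=O\Big(\frac{\ell\lambda_0}{T}+\sqrt{\frac{\sigma^2\ell\lambda_0}{T}}\Big),$$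 where $O(\cdot)$ hides an absolute constant.
   Context: Let $\mathcal X\subseteq\mathbb R^d$ be closed and convex, $\|\cdot\|$ a norm on $\mathbb R^d$ with dual norm $\|z\|_*=\sup_{\|u\|\le1}\langle z,u\rangle$. The problem is $\min_{x\in\mathcal X}\Phi(x):=F(x)+r(x)$, where $F(x)=\mathbb E_{\xi\sim P}[f(x,\xi)]$ is differentiable (possibly nonconvex), $r:\mathbb R^d\to\mathbb R$ is convex, proper and lower semicontinuous, and $\Phi^*:=\inf_{x\in\mathcal X}\Phi(x)>-\infty$. A distance generating function (DGF) is a function $\omega:\mathrm{cl}(\mathcal S)\to\mathbb R$, where $\mathcal S$ is open with $\mathrm{ri}(\mathcal X)\subseteq\mathcal S$, $\omega$ is continuously differentiable on $\mathcal S$ and $1$-strongly convex w.r.t. $\|\cdot\|$ on $\mathrm{cl}(\mathcal S)$. Bregman divergence: $D_\omega(x,y)=\omega(x)-\omega(y)-\langle\nabla\omega(y),x-y\rangle$. For $\rho>0$: Bregman Moreau envelope $\Phi_{1/\rho}(x):=\min_{y\in\mathcal X}[\Phi(y)+\rho D_\omega(y,x)]$; Bregman forward–backward envelope $\mathcal D_\rho(x):=-2\rho\min_{y\in\mathcal X}Q_\rho(x,y)$ with $Q_\rho(x,y):=\langle\nabla F(x),y-x\rangle+\rho D_\omega(y,x)+r(y)-r(x)$ (minimizers in these definitions and in the algorithm are assumed to exist). $F$ is $(\ell,\omega)$-relatively smooth on $\mathcal X\cap\mathcal S$ if for all $x,y\in\mathcal X\cap\mathcal S$: $-\ell D_\omega(x,y)\le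 F(x)-F(y)-\langle\nabla F(y),x-y\rangle\le\ell D_\omega(x,y)$. *)

theory Defs
  imports "HOL-Probability.Probability"
begin

text \<open>A general norm on the ambient space (R^d is modelled by a euclidean_space type,
  whose inner product is the standard pairing).\<close>
definition is_norm :: "('a::real_vector \<Rightarrow> real) \<Rightarrow> bool" where
  "is_norm nrm \<longleftrightarrow> (\<forall>x. nrm x = 0 \<longleftrightarrow> x = 0)
     \<and> (\<forall>x y. nrm (x + y) \<le> nrm x + nrm y)
     \<and> (\<forall>c x. nrm (c *\<^sub>R x) = \<bar>c\<bar> * nrm x)"

definition dual_norm :: "('a::real_inner \<Rightarrow> real) \<Rightarrow> 'a \<Rightarrow> real" where
  "dual_norm nrm z = Sup {z \<bullet> u | u. nrm u \<le> 1}"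

definition strongly_convex_wrt ::
  "('a::real_vector \<Rightarrow> real) \<Rightarrow> real \<Rightarrow> 'a set \<Rightarrow> ('a \<Rightarrow> real) \<Rightarrow> bool" where
  "strongly_convex_wrt nrm \<mu> A \<phi> \<longleftrightarrow> convex A \<and>
     (\<forall>x\<in>A. \<forall>y\<in>A. \<forall>t\<in>{0..1}.
        \<phi> (t *\<^sub>R x + (1 - t) *\<^sub>R y)
          \<le> t * \<phi> x + (1 - t) * \<phi> y - \<mu> / 2 * t * (1 - t) * (nrm (x - y))\<^sup>2)"

definition is_DGF ::
  "('a::euclidean_space \<Rightarrow> real) \<Rightarrow> 'a set \<Rightarrow> 'a set \<Rightarrow> ('a \<Rightarrow> real) \<Rightarrow> ('a \<Rightarrow> 'a) \<Rightarrow> bool" where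
  "is_DGF nrm X S \<omega> g\<omega> \<longleftrightarrow> open S \<and> rel_interior X \<subseteq> S
     \<and> (\<forall>x\<in>S. GDERIV \<omega> x :> g\<omega> x) \<and> continuous_on S g\<omega>
     \<and> strongly_convex_wrt nrm 1 (closure S) \<omega>"

definition bregman :: "('a::real_inner \<Rightarrow> real) \<Rightarrow> ('a \<Rightarrow> 'a) \<Rightarrow> 'a \<Rightarrow> 'a \<Rightarrow> real" where
  "bregman \<omega> g\<omega> x y = \<omega> x - \<omega> y - g\<omega> y \<bullet> (x - y)"

definition rel_smooth ::
  "('a::real_inner \<Rightarrow> real) \<Rightarrow> ('a \<Rightarrow> 'a) \<Rightarrow> ('a \<Rightarrow> real) \<Rightarrow> ('a \<Rightarrow> 'a) \<Rightarrow> real \<Rightarrow> 'a set \<Rightarrow> bool" where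
  "rel_smooth F gradF \<omega> g\<omega> L A \<longleftrightarrow>
     (\<forall>x\<in>A. \<forall>y\<in>A.
        - L * bregman \<omega> g\<omega> x y \<le> F x - F y - gradF y \<bullet> (x - y)
      \<and> F x - F y - gradF y \<bullet> (x - y) \<le> L * bregman \<omega> g\<omega> x y)"

text \<open>Bregman Moreau envelope Phi_{1/rho}(x) (the min, written as Inf).\<close>
definition bregman_moreau ::
  "('a::real_inner \<Rightarrow> real) \<Rightarrow> ('a \<Rightarrow> real) \<Rightarrow> ('a \<Rightarrow> 'a) \<Rightarrow> 'a set \<Rightarrow> real \<Rightarrow> 'a \<Rightarrow> real" where
  "bregman_moreau \<Phi> \<omega> g\<omega> X \<rho> x = Inf ((\<lambda>y. \<Phi> y + \<rho> * bregman \<omega> g\<omega> y x) ` X)"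

definition fbe_Q ::
  "('a::real_inner \<Rightarrow> 'a) \<Rightarrow> ('a \<Rightarrow> real) \<Rightarrow> ('a \<Rightarrow> real) \<Rightarrow> ('a \<Rightarrow> 'a) \<Rightarrow> real \<Rightarrow> 'a \<Rightarrow> 'a \<Rightarrow> real" where
  "fbe_Q gradF r \<omega> g\<omega> \<rho> x y = gradF x \<bullet> (y - x) + \<rho> * bregman \<omega> g\<omega> y x + r y - r x"

definition bregman_fbe ::
  "('a::real_inner \<Rightarrow> 'a) \<Rightarrow> ('a \<Rightarrow> real) \<Rightarrow> ('a \<Rightarrow> real) \<Rightarrow> ('a \<Rightarrow> 'a) \<Rightarrow> 'a set \<Rightarrow> real \<Rightarrow> 'a \<Rightarrow> real" where
  "bregman_fbe gradF r \<omega> g\<omega> X \<rho> x = - 2 * \<rho> * Inf (fbe_Q gradF r \<omega> g\<omega> \<rho> x ` X)"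

text \<open>Sample-path space: xi_0, xi_1, ... i.i.d. with law P.\<close>
abbreviation sample_space :: "'b measure \<Rightarrow> (nat \<Rightarrow> 'b) measure" where
  "sample_space P \<equiv> (\<Pi>\<^sub>M i\<in>(UNIV::nat set). P)"

text \<open>All standing assumptions of the theorem together with the statement that xs are
  the Stochastic Mirror Descent iterates (x_t as a function of the sample path w,
  with xi_t = w t) started at x0 with step sizes eta.\<close>
definition SMD_instance ::
  "'a::euclidean_space set \<Rightarrow> 'a set \<Rightarrow> ('a \<Rightarrow> real) \<Rightarrow> ('a \<Rightarrow> real) \<Rightarrow> ('a \<Rightarrow> 'a)
   \<Rightarrow> ('a \<Rightarrow> 'b \<Rightarrow> real) \<Rightarrow> ('a \<Rightarrow> real) \<Rightarrow> ('a \<Rightarrow> 'a) \<Rightarrow> ('a \<Rightarrow> 'b \<Rightarrow> 'a) \<Rightarrow> 'b measure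
   \<Rightarrow> ('a \<Rightarrow> real) \<Rightarrow> real \<Rightarrow> real \<Rightarrow> 'a \<Rightarrow> (nat \<Rightarrow> real) \<Rightarrow> (nat \<Rightarrow> (nat \<Rightarrow> 'b) \<Rightarrow> 'a) \<Rightarrow> bool"
  where
  "SMD_instance X S nrm \<omega> g\<omega> f F gradF g P r L \<sigma> x0 \<eta> xs \<longleftrightarrow>
     \<comment> \<open>geometry\<close>
     closed X \<and> convex X \<and> is_norm nrm \<and> is_DGF nrm X S \<omega> g\<omega>
     \<comment> \<open>objective\<close>
   \<and> prob_space P
   \<and> (\<forall>x\<in>X. integrable P (f x) \<and> F x = (\<integral>\<xi>. f x \<xi> \<partial>P))
   \<and> (\<forall>x. GDERIV F x :> gradF x)
   \<and> convex_on UNIV r \<and> (\<forall>c. closed {x. r x \<le> c})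
   \<and> bdd_below ((\<lambda>x. F x + r x) ` X)
   \<and> L > 0 \<and> rel_smooth F gradF \<omega> g\<omega> L (X \<inter> S)
     \<comment> \<open>existence of minimizers in the envelope definitions\<close>
   \<and> (\<forall>\<rho>>0. \<forall>x\<in>X \<inter> S. \<exists>y\<in>X. \<forall>z\<in>X.
         F y + r y + \<rho> * bregman \<omega> g\<omega> y x \<le> F z + r z + \<rho> * bregman \<omega> g\<omega> z x)
   \<and> (\<forall>\<rho>>0. \<forall>x\<in>X \<inter> S. \<exists>y\<in>X. \<forall>z\<in>X.
         fbe_Q gradF r \<omega> g\<omega> \<rho> x y \<le> fbe_Q gradF r \<omega> g\<omega> \<rho> x z)
     \<comment> \<open>stochastic oracle: g x xi = gradient of f(., xi) at x, unbiased, bounded variance\<close>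
   \<and> (\<lambda>(x, \<xi>). g x \<xi>) \<in> borel_measurable (borel \<Otimes>\<^sub>M P)
   \<and> (\<forall>x\<in>X. \<forall>\<xi>\<in>space P. GDERIV (\<lambda>y. f y \<xi>) x :> g x \<xi>)
   \<and> (\<forall>x\<in>X. integrable P (g x) \<and> (\<integral>\<xi>. g x \<xi> \<partial>P) = gradF x)
   \<and> (\<forall>x\<in>X. (\<integral>\<^sup>+\<xi>. ennreal ((dual_norm nrm (g x \<xi> - gradF x))\<^sup>2) \<partial>P) \<le> ennreal (\<sigma>\<^sup>2))
     \<comment> \<open>step sizes\<close>
   \<and> (\<forall>t. 0 < \<eta> t) \<and> (\<forall>t. \<eta> (Suc t) \<le> \<eta> t) \<and> \<eta> 0 \<le> 1 / (2 * L)
     \<comment> \<open>the iterates\<close>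
   \<and> x0 \<in> X \<inter> S
   \<and> (\<forall>t. xs t \<in> borel_measurable (sample_space P))
   \<and> (\<forall>w\<in>space (sample_space P). xs 0 w = x0 \<and>
        (\<forall>t. xs (Suc t) w \<in> X \<inter> S \<and>
           (\<forall>z\<in>X. \<eta> t * (g (xs t w) (w t) \<bullet> xs (Suc t) w + r (xs (Suc t) w))
                     + bregman \<omega> g\<omega> (xs (Suc t) w) (xs t w)
                   \<le> \<eta> t * (g (xs t w) (w t) \<bullet> z + r z) + bregman \<omega> g\<omega> z (xs t w))))"

definition lambda0 ::
  "'a::real_inner set \<Rightarrow> ('a \<Rightarrow> real) \<Rightarrow> ('a \<Rightarrow> 'a) \<Rightarrow> ('a \<Rightarrow> real) \<Rightarrow> ('a \<Rightarrow> real) \<Rightarrow> real \<Rightarrow> 'a \<Rightarrow> real"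
  where
  "lambda0 X \<omega> g\<omega> F r L x0 =
     (let \<Phi> = (\<lambda>x. F x + r x); \<Phi>star = Inf (\<Phi> ` X) in
      bregman_moreau \<Phi> \<omega> g\<omega> X (2 * L) x0 - \<Phi>star + \<Phi> x0 - \<Phi>star)"

text \<open>E[D_{3l}(xbar_T)], where xbar_T = x_t with probability eta_t / sum_{s<T} eta_s,
  the index being drawn independently of the samples.\<close>
definition exp_fbe_output ::
  "'a::real_inner set \<Rightarrow> ('a \<Rightarrow> real) \<Rightarrow> ('a \<Rightarrow> 'a) \<Rightarrow> ('a \<Rightarrow> 'a) \<Rightarrow> ('a \<Rightarrow> real) \<Rightarrow> 'b measure
   \<Rightarrow> real \<Rightarrow> (nat \<Rightarrow> real) \<Rightarrow> (nat \<Rightarrow> (nat \<Rightarrow> 'b) \<Rightarrow> 'a) \<Rightarrow> nat \<Rightarrow> ennreal" where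
  "exp_fbe_output X \<omega> g\<omega> gradF r P L \<eta> xs T =
     (\<Sum>t<T. ennreal (\<eta> t / (\<Sum>s<T. \<eta> s)) *
        (\<integral>\<^sup>+w. ennreal (bregman_fbe gradF r \<omega> g\<omega> X (3 * L) (xs t w)) \<partial>sample_space P))"

end

theory Submission
  imports Defs
begin


lemma pim_fun_upd_nn:
  fixes g :: "(nat \<Rightarrow> 'b) \<Rightarrow> ennreal"
  assumes P: "prob_space P" and g: "g \<in> borel_measurable (PiM UNIV (\<lambda>_. P))"
  shows "(\<integral>\<^sup>+w. g w \<partial>(PiM UNIV (\<lambda>_. P))) = (\<integral>\<^sup>+w. (\<integral>\<^sup>+\<xi>. g (w(t:=\<xi>)) \<partial>P) \<partial>(PiM UNIV (\<lambda>_. P)))"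
proof -
  let ?O = "PiM UNIV (\<lambda>_::nat. P)"
  interpret O: prob_space ?O using P by (intro prob_space_PiM) auto
  interpret P: prob_space P by fact
  interpret PO: pair_sigma_finite P ?O by unfold_locales
  have d: "distr (P \<Otimes>\<^sub>M ?O) ?O (\<lambda>(x, X). X(t := x)) = ?O"
    using distr_pair_PiM_eq_PiM[of UNIV "\<lambda>_. P" t] P by simp
  have m: "(\<lambda>(x, X). X(t := x)) \<in> measurable (P \<Otimes>\<^sub>M ?O) ?O"
  proof -
    have "(\<lambda>z. (snd z)(t := fst z)) \<in> measurable (P \<Otimes>\<^sub>M ?O) ?O"
      by (rule measurable_fun_upd[where J=UNIV]) auto
    then show ?thesis by (simp add: case_prod_beta)
  qed
  have "(\<integral>\<^sup>+w. g w \<partial>?O) = (\<integral>\<^sup>+w. g w \<partial>(distr (P \<Otimes>\<^sub>M ?O) ?O (\<lambda>(x, X). X(t := x))))"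
    by (simp add: d)
  also have "\<dots> = (\<integral>\<^sup>+z. g ((\<lambda>(x, X). X(t := x)) z) \<partial>(P \<Otimes>\<^sub>M ?O))"
    by (rule nn_integral_distr[OF m]) (simp add: g)
  also have "\<dots> = (\<integral>\<^sup>+w. (\<integral>\<^sup>+\<xi>. g (w(t:=\<xi>)) \<partial>P) \<partial>?O)"
    using PO.nn_integral_snd[symmetric, of "\<lambda>(x, X). g (X(t := x))"] m g
    by (simp add: case_prod_beta measurable_comp split_beta')
  finally show ?thesis .
qed

lemma pim_fun_upd_nn_le:
  fixes H :: "(nat \<Rightarrow> 'b) \<Rightarrow> ennreal"
  assumes P: "prob_space P"
  shows "(\<integral>\<^sup>+w. H w \<partial>(PiM UNIV (\<lambda>_. P))) \<le> (\<integral>\<^sup>+w. (\<integral>\<^sup>+\<xi>. H (w(t:=\<xi>)) \<partial>P) \<partial>(PiM UNIV (\<lambda>_. P)))"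
  unfolding nn_integral_def[of "PiM UNIV (\<lambda>_. P)" H]
proof (rule SUP_least, safe)
  fix g assume sg: "simple_function (PiM UNIV (\<lambda>_. P)) g" and le: "g \<le> H"
  have "integral\<^sup>S (PiM UNIV (\<lambda>_. P)) g = (\<integral>\<^sup>+w. g w \<partial>(PiM UNIV (\<lambda>_. P)))"
    using nn_integral_eq_simple_integral[OF sg] by simp
  also have "\<dots> = (\<integral>\<^sup>+w. (\<integral>\<^sup>+\<xi>. g (w(t:=\<xi>)) \<partial>P) \<partial>(PiM UNIV (\<lambda>_. P)))"
    by (rule pim_fun_upd_nn[OF P borel_measurable_simple_function[OF sg]])
  also have "\<dots> \<le> (\<integral>\<^sup>+w. (\<integral>\<^sup>+\<xi>. H (w(t:=\<xi>)) \<partial>P) \<partial>(PiM UNIV (\<lambda>_. P)))"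
    using le by (intro nn_integral_mono) (auto simp: le_fun_def)
  finally show "integral\<^sup>S (PiM UNIV (\<lambda>_. P)) g \<le> \<dots>" .
qed

lemma nn_lower_cmult:
  fixes f :: "'a \<Rightarrow> ennreal"
  shows "c * (\<integral>\<^sup>+x. f x \<partial>M) \<le> (\<integral>\<^sup>+x. c * f x \<partial>M)"
proof -
  have "c * (\<integral>\<^sup>+x. f x \<partial>M) = (SUP g \<in> {g. simple_function M g \<and> g \<le> f}. c * integral\<^sup>S M g)"
    unfolding nn_integral_def[of M f] by (simp add: SUP_mult_left_ennreal)
  also have "\<dots> \<le> (\<integral>\<^sup>+x. c * f x \<partial>M)"
  proof (rule SUP_least, safe)
    fix g assume sg: "simple_function M g" and le: "g \<le> f"
    have "c * integral\<^sup>S M g = c * (\<integral>\<^sup>+x. g x \<partial>M)"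
      using nn_integral_eq_simple_integral[OF sg] by simp
    also have "\<dots> = (\<integral>\<^sup>+x. c * g x \<partial>M)"
      by (rule nn_integral_cmult[symmetric, OF borel_measurable_simple_function[OF sg]])
    also have "\<dots> \<le> (\<integral>\<^sup>+x. c * f x \<partial>M)"
      using le by (intro nn_integral_mono) (auto simp: le_fun_def intro: mult_left_mono)
    finally show "c * integral\<^sup>S M g \<le> \<dots>" .
  qed
  finally show ?thesis .
qed

lemma nn_lower_add:
  fixes f h :: "'a \<Rightarrow> ennreal"
  shows "(\<integral>\<^sup>+x. f x \<partial>M) + (\<integral>\<^sup>+x. h x \<partial>M) \<le> (\<integral>\<^sup>+x. f x + h x \<partial>M)"
proof -
  have ne: "{g. simple_function M g \<and> g \<le> f} \<noteq> {}" "{g. simple_function M g \<and> g \<le> h} \<noteq> {}"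
    by (auto intro!: exI[of _ "\<lambda>_. 0"] simp: le_fun_def)
  have "(\<integral>\<^sup>+x. f x \<partial>M) + (\<integral>\<^sup>+x. h x \<partial>M) =
      (SUP a \<in> {g. simple_function M g \<and> g \<le> f}. integral\<^sup>S M a + (\<integral>\<^sup>+x. h x \<partial>M))"
    unfolding nn_integral_def[of M f] using ne by (simp add: ennreal_SUP_add_left)
  also have "\<dots> \<le> (\<integral>\<^sup>+x. f x + h x \<partial>M)"
  proof (rule SUP_least, safe)
    fix a assume sa: "simple_function M a" and la: "a \<le> f"
    have "integral\<^sup>S M a + (\<integral>\<^sup>+x. h x \<partial>M) =
       (SUP b \<in> {g. simple_function M g \<and> g \<le> h}. integral\<^sup>S M a + integral\<^sup>S M b)"
      unfolding nn_integral_def[of M h] using ne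
      by (simp add: ennreal_SUP_add_right)
    also have "\<dots> \<le> (\<integral>\<^sup>+x. f x + h x \<partial>M)"
    proof (rule SUP_least, safe)
      fix b assume sb: "simple_function M b" and lb: "b \<le> h"
      have "integral\<^sup>S M a + integral\<^sup>S M b = (\<integral>\<^sup>+x. a x \<partial>M) + (\<integral>\<^sup>+x. b x \<partial>M)"
        using nn_integral_eq_simple_integral[OF sa] nn_integral_eq_simple_integral[OF sb] by simp
      also have "\<dots> = (\<integral>\<^sup>+x. a x + b x \<partial>M)"
        by (rule nn_integral_add[symmetric]) (auto intro: borel_measurable_simple_function sa sb)
      also have "\<dots> \<le> (\<integral>\<^sup>+x. f x + h x \<partial>M)"
        using la lb by (intro nn_integral_mono) (auto simp: le_fun_def intro: add_mono)
      finally show "integral\<^sup>S M a + integral\<^sup>S M b \<le> \<dots>" .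
    qed
    finally show "integral\<^sup>S M a + (\<integral>\<^sup>+x. h x \<partial>M) \<le> \<dots>" .
  qed
  finally show ?thesis .
qed

lemma nn_lower_sum:
  fixes f :: "nat \<Rightarrow> 'a \<Rightarrow> ennreal"
  shows "(\<Sum>t<T. (\<integral>\<^sup>+x. f t x \<partial>M)) \<le> (\<integral>\<^sup>+x. (\<Sum>t<T. f t x) \<partial>M)"
proof (induction T)
  case 0 then show ?case by simp
next
  case (Suc T)
  have "(\<Sum>t<Suc T. (\<integral>\<^sup>+x. f t x \<partial>M)) = (\<Sum>t<T. (\<integral>\<^sup>+x. f t x \<partial>M)) + (\<integral>\<^sup>+x. f T x \<partial>M)" by simp
  also have "\<dots> \<le> (\<integral>\<^sup>+x. (\<Sum>t<T. f t x) \<partial>M) + (\<integral>\<^sup>+x. f T x \<partial>M)"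
    using Suc by (rule add_right_mono)
  also have "\<dots> \<le> (\<integral>\<^sup>+x. (\<Sum>t<T. f t x) + f T x \<partial>M)" by (rule nn_lower_add)
  finally show ?case by simp
qed



lemma isn_zero: "is_norm nrm \<Longrightarrow> nrm 0 = 0" by (simp add: is_norm_def)
lemma isn_tri: "is_norm nrm \<Longrightarrow> nrm (x + y) \<le> nrm x + nrm y" by (simp add: is_norm_def)
lemma isn_scale: "is_norm nrm \<Longrightarrow> nrm (c *\<^sub>R x) = \<bar>c\<bar> * nrm x" by (simp add: is_norm_def)
lemma isn_eq0: "is_norm nrm \<Longrightarrow> nrm x = 0 \<longleftrightarrow> x = 0" by (simp add: is_norm_def)
lemma isn_minus: "is_norm nrm \<Longrightarrow> nrm (- x) = nrm x"
  using isn_scale[of nrm "-1" x] by simp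
lemma isn_nonneg: "is_norm nrm \<Longrightarrow> 0 \<le> nrm x"
  using isn_tri[of nrm x "-x"] isn_zero[of nrm] isn_minus[of nrm x] by simp
lemma isn_commute: "is_norm nrm \<Longrightarrow> nrm (x - y) = nrm (y - x)"
  using isn_minus[of nrm "x - y"] by simp

lemma isn_sum: "is_norm nrm \<Longrightarrow> nrm (\<Sum>i\<in>A. f i) \<le> (\<Sum>i\<in>A. nrm (f i))"
proof (induction A rule: infinite_finite_induct)
  case (infinite A) then show ?case by (simp add: isn_zero)
next
  case empty then show ?case by (simp add: isn_zero)
next
  case (insert x F) then show ?case
    using isn_tri[of nrm "f x" "sum f F"] by simp
qed

lemma isn_upper:
  fixes nrm :: "'a::euclidean_space \<Rightarrow> real"
  assumes n: "is_norm nrm"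
  shows "nrm x \<le> (\<Sum>b\<in>Basis. nrm b) * norm x"
proof -
  have "nrm x = nrm (\<Sum>b\<in>Basis. (x \<bullet> b) *\<^sub>R b)" by (simp add: euclidean_representation)
  also have "\<dots> \<le> (\<Sum>b\<in>Basis. nrm ((x \<bullet> b) *\<^sub>R b))" by (rule isn_sum[OF n])
  also have "\<dots> = (\<Sum>b\<in>Basis. \<bar>x \<bullet> b\<bar> * nrm b)" by (simp add: isn_scale[OF n])
  also have "\<dots> \<le> (\<Sum>b\<in>Basis. norm x * nrm b)"
    by (intro sum_mono mult_right_mono Basis_le_norm isn_nonneg[OF n]) auto
  finally show ?thesis by (simp add: sum_distrib_left mult.commute)
qed

lemma isn_cont:
  fixes nrm :: "'a::euclidean_space \<Rightarrow> real"
  assumes n: "is_norm nrm"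
  shows "continuous_on UNIV nrm"
proof -
  define K where "K = (\<Sum>b\<in>Basis. nrm (b::'a))"
  have K: "0 \<le> K" unfolding K_def by (intro sum_nonneg isn_nonneg[OF n])
  have l: "\<bar>nrm x - nrm y\<bar> \<le> K * norm (x - y)" for x y
  proof -
    have "nrm x \<le> nrm y + nrm (x - y)" using isn_tri[OF n, of y "x - y"] by simp
    moreover have "nrm y \<le> nrm x + nrm (y - x)" using isn_tri[OF n, of x "y - x"] by simp
    moreover have "nrm (x - y) \<le> K * norm (x - y)" "nrm (y - x) \<le> K * norm (x - y)"
      using isn_upper[OF n, of "x - y"] isn_upper[OF n, of "y - x"] by (auto simp: K_def norm_minus_commute)
    ultimately show ?thesis by linarith
  qed
  show ?thesis
    unfolding continuous_on_iff
  proof (intro ballI allI impI)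
    fix x and e :: real assume "0 < e"
    show "\<exists>d>0. \<forall>x'\<in>UNIV. dist x' x < d \<longrightarrow> dist (nrm x') (nrm x) < e"
    proof (intro exI[of _ "e / (K + 1)"] conjI ballI impI)
      show "0 < e / (K + 1)" using \<open>0 < e\<close> K by simp
      fix x' assume "dist x' x < e / (K + 1)"
      then have "(K + 1) * norm (x' - x) < e" using K by (simp add: dist_norm field_simps)
      moreover have "\<bar>nrm x' - nrm x\<bar> \<le> K * norm (x' - x)" by (rule l)
      moreover have "K * norm (x' - x) \<le> (K + 1) * norm (x' - x)" by (simp add: mult_right_mono)
      ultimately show "dist (nrm x') (nrm x) < e" by (simp add: dist_real_def)
    qed
  qed
qed

lemma isn_lower:
  fixes nrm :: "'a::euclidean_space \<Rightarrow> real"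
  assumes n: "is_norm nrm"
  shows "\<exists>c>0. \<forall>x. c * norm x \<le> nrm x"
proof -
  have cpt: "compact (sphere (0::'a) 1)" by simp
  obtain b :: 'a where b: "b \<in> Basis" using nonempty_Basis by blast
  then have ne: "sphere (0::'a) 1 \<noteq> {}" by (auto intro!: exI[of _ b] simp: sphere_def)
  obtain u where u: "u \<in> sphere 0 1" and umin: "\<forall>y\<in>sphere 0 1. nrm u \<le> nrm y"
    using continuous_attains_inf[OF cpt ne continuous_on_subset[OF isn_cont[OF n]]] by blast
  have "u \<noteq> 0" using u by auto
  then have c: "0 < nrm u" using isn_nonneg[OF n, of u] isn_eq0[OF n, of u] by linarith
  have "nrm u * norm x \<le> nrm x" for x
  proof (cases "x = 0")
    case True then show ?thesis by (simp add: isn_zero[OF n])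
  next
    case False
    then have "(1 / norm x) *\<^sub>R x \<in> sphere 0 1" by simp
    then have "nrm u \<le> nrm ((1 / norm x) *\<^sub>R x)" using umin by blast
    also have "\<dots> = nrm x / norm x" by (simp add: isn_scale[OF n])
    finally show ?thesis using False by (simp add: field_simps)
  qed
  then show ?thesis using c by blast
qed

lemma dn_facts:
  fixes nrm :: "'a::euclidean_space \<Rightarrow> real"
  assumes n: "is_norm nrm"
  shows "\<exists>c>0. \<forall>z u. (nrm u \<le> 1 \<longrightarrow> z \<bullet> u \<le> dual_norm nrm z) \<and> (\<forall>z'. dual_norm nrm z \<le> dual_norm nrm z' + norm (z - z') / c)"
proof -
  obtain c where c: "c > 0" "\<And>x. c * norm x \<le> nrm x" using isn_lower[OF n] by blast
  have nu: "norm u \<le> 1 / c" if "nrm u \<le> 1" for u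
    using c(2)[of u] that c(1) by (simp add: field_simps)
  have bd: "bdd_above {z \<bullet> u | u. nrm u \<le> 1}" for z
  proof (rule bdd_aboveI[of _ "norm z / c"], safe)
    fix u assume "nrm u \<le> 1"
    have "z \<bullet> u \<le> norm z * norm u" by (rule norm_cauchy_schwarz)
    also have "\<dots> \<le> norm z * (1 / c)" using mult_left_mono[OF nu[OF \<open>nrm u \<le> 1\<close>] norm_ge_zero] by simp
    finally show "z \<bullet> u \<le> norm z / c" by simp
  qed
  have ne: "{z \<bullet> u | u. nrm u \<le> 1} \<noteq> {}" for z
    by (auto intro!: exI[of _ 0] simp: isn_zero[OF n])
  have up: "z \<bullet> u \<le> dual_norm nrm z" if "nrm u \<le> 1" for z u
    unfolding dual_norm_def using that by (intro cSup_upper bd) auto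
  have lip: "dual_norm nrm z \<le> dual_norm nrm z' + norm (z - z') / c" for z z'
    unfolding dual_norm_def[of nrm z]
  proof (rule cSup_least[OF ne], safe)
    fix u assume u: "nrm u \<le> 1"
    have "z \<bullet> u = (z - z') \<bullet> u + z' \<bullet> u" by (simp add: inner_diff_left)
    also have "(z - z') \<bullet> u \<le> norm (z - z') * norm u" by (rule norm_cauchy_schwarz)
    also have "\<dots> \<le> norm (z - z') * (1 / c)" using mult_left_mono[OF nu[OF u] norm_ge_zero] by simp
    finally show "z \<bullet> u \<le> dual_norm nrm z' + norm (z - z') / c" using up[OF u, of z'] by simp
  qed
  show ?thesis using c(1) up lip by blast
qed

lemma dn_cs:
  fixes nrm :: "'a::euclidean_space \<Rightarrow> real"
  assumes n: "is_norm nrm"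
  shows "z \<bullet> u \<le> dual_norm nrm z * nrm u"
proof -
  obtain c where c0: "c > 0" and c1: "\<forall>z u. (nrm u \<le> 1 \<longrightarrow> z \<bullet> u \<le> dual_norm nrm z) \<and> (\<forall>z'. dual_norm nrm z \<le> dual_norm nrm z' + norm (z - z') / c)"
    using dn_facts[OF n] by blast
  have c: "\<And>z u. nrm u \<le> 1 \<Longrightarrow> z \<bullet> u \<le> dual_norm nrm z" using c1 by blast
  show ?thesis
  proof (cases "u = 0")
    case True then show ?thesis using isn_zero[OF n] by simp
  next
    case False
    then have p: "0 < nrm u" using isn_nonneg[OF n, of u] isn_eq0[OF n, of u] by linarith
    have "nrm ((1 / nrm u) *\<^sub>R u) \<le> 1" using p by (simp add: isn_scale[OF n])
    then have "z \<bullet> ((1 / nrm u) *\<^sub>R u) \<le> dual_norm nrm z" by (rule c)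
    then show ?thesis using p by (simp add: field_simps)
  qed
qed

lemma dn_cont:
  fixes nrm :: "'a::euclidean_space \<Rightarrow> real"
  assumes n: "is_norm nrm"
  shows "continuous_on UNIV (dual_norm nrm)"
proof -
  obtain c where c0: "c > 0" and c1: "\<forall>z u. (nrm u \<le> 1 \<longrightarrow> z \<bullet> u \<le> dual_norm nrm z) \<and> (\<forall>z'. dual_norm nrm z \<le> dual_norm nrm z' + norm (z - z') / c)"
    using dn_facts[OF n] by blast
  have c: "c > 0" "\<And>z z'. dual_norm nrm z \<le> dual_norm nrm z' + norm (z - z') / c" using c0 c1 by auto
  show ?thesis
    unfolding continuous_on_iff
  proof (intro ballI allI impI)
    fix x and e :: real assume "0 < e"
    show "\<exists>d>0. \<forall>x'\<in>UNIV. dist x' x < d \<longrightarrow> dist (dual_norm nrm x') (dual_norm nrm x) < e"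
    proof (intro exI[of _ "e * c"] conjI ballI impI)
      show "0 < e * c" using \<open>0 < e\<close> c by simp
      fix x' assume d: "dist x' x < e * c"
      have "norm (x' - x) / c < e" "norm (x - x') / c < e" using d c(1)
        by (auto simp: dist_norm field_simps norm_minus_commute)
      then show "dist (dual_norm nrm x') (dual_norm nrm x) < e"
        using c(2)[of x' x] c(2)[of x x'] by (simp add: dist_real_def abs_less_iff)
    qed
  qed
qed



lemma le_from_lim:
  fixes a b :: real and q :: "real \<Rightarrow> real"
  assumes q: "(q \<longlongrightarrow> 0) (at_right 0)" and h: "\<And>s. 0 < s \<Longrightarrow> s < 1 \<Longrightarrow> a \<le> b + q s"
  shows "a \<le> b"
proof -
  have "((\<lambda>s. b + q s) \<longlongrightarrow> b + 0) (at_right 0)" by (intro tendsto_intros q)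
  moreover have "eventually (\<lambda>s. a \<le> b + q s) (at_right (0::real))"
    unfolding eventually_at_right[OF zero_less_one] by (intro exI[of _ 1]) (auto intro: h)
  ultimately show ?thesis
    using tendsto_lowerbound[of "\<lambda>s. b + q s" "b + 0" "at_right (0::real)" a] by simp
qed

lemma lim_breg:
  fixes \<omega> :: "'a::euclidean_space \<Rightarrow> real"
  assumes d: "GDERIV \<omega> x :> g\<omega> x"
  shows "((\<lambda>s. bregman \<omega> g\<omega> (x + s *\<^sub>R (z - x)) x / s) \<longlongrightarrow> 0) (at_right 0)"
proof -
  let ?D = "(z - x) \<bullet> g\<omega> x"
  have d1: "(\<omega> has_derivative (\<lambda>h. h \<bullet> g\<omega> x)) (at (x + 0 *\<^sub>R (z - x)))"
    using d by (simp add: gderiv_def)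
  have p: "((\<lambda>s::real. x + s *\<^sub>R (z - x)) has_derivative (\<lambda>s. s *\<^sub>R (z - x))) (at 0)"
    by (auto intro!: derivative_eq_intros)
  have "((\<lambda>s. \<omega> (x + s *\<^sub>R (z - x))) has_derivative (\<lambda>s. (s *\<^sub>R (z - x)) \<bullet> g\<omega> x)) (at 0)"
    using has_derivative_compose[OF p d1] by (simp add: o_def)
  moreover have "(\<lambda>s. (s *\<^sub>R (z - x)) \<bullet> g\<omega> x) = (*) ?D" by (auto simp: mult.commute)
  ultimately have "((\<lambda>s. \<omega> (x + s *\<^sub>R (z - x))) has_field_derivative ?D) (at 0)"
    by (simp add: has_field_derivative_def)
  then have "((\<lambda>s. (\<omega> (x + s *\<^sub>R (z - x)) - \<omega> (x + 0 *\<^sub>R (z - x))) / (s - 0)) \<longlongrightarrow> ?D) (at 0)"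
    by (simp only: has_field_derivative_iff)
  then have "((\<lambda>s. (\<omega> (x + s *\<^sub>R (z - x)) - \<omega> x) / s) \<longlongrightarrow> ?D) (at_right 0)"
    by (auto intro: tendsto_mono[OF at_within_le_at])
  then have "((\<lambda>s. (\<omega> (x + s *\<^sub>R (z - x)) - \<omega> x) / s - ?D) \<longlongrightarrow> ?D - ?D) (at_right 0)"
    by (intro tendsto_intros)
  then have "((\<lambda>s. (\<omega> (x + s *\<^sub>R (z - x)) - \<omega> x) / s - ?D) \<longlongrightarrow> 0) (at_right 0)" by simp
  moreover have "eventually (\<lambda>s. (\<omega> (x + s *\<^sub>R (z - x)) - \<omega> x) / s - ?D = bregman \<omega> g\<omega> (x + s *\<^sub>R (z - x)) x / s) (at_right (0::real))"
    unfolding eventually_at_right[OF zero_less_one]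
    by (intro exI[of _ 1]) (auto simp: bregman_def divide_simps inner_diff_right inner_commute algebra_simps)
  ultimately show ?thesis by (rule Lim_transform_eventually)
qed



locale geo =
  fixes X S :: "'a::euclidean_space set" and nrm \<omega> and g\<omega> :: "'a \<Rightarrow> 'a"
  assumes clX: "closed X" and cvX: "convex X" and nrm: "is_norm nrm"
    and dgf: "is_DGF nrm X S \<omega> g\<omega>" and Xne: "X \<noteq> {}"
begin

lemma openS: "open S" and riS: "rel_interior X \<subseteq> S" and gd: "\<And>x. x \<in> S \<Longrightarrow> GDERIV \<omega> x :> g\<omega> x"
  and scv: "strongly_convex_wrt nrm 1 (closure S) \<omega>"
  using dgf by (auto simp: is_DGF_def)

lemma cvS: "convex (closure S)" using scv by (simp add: strongly_convex_wrt_def)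

lemma sc: "a \<in> closure S \<Longrightarrow> b \<in> closure S \<Longrightarrow> 0 \<le> t \<Longrightarrow> t \<le> 1 \<Longrightarrow>
   \<omega> (t *\<^sub>R a + (1 - t) *\<^sub>R b) \<le> t * \<omega> a + (1 - t) * \<omega> b - 1 / 2 * t * (1 - t) * (nrm (a - b))\<^sup>2"
  using scv by (simp add: strongly_convex_wrt_def)

lemma cvx: "a \<in> closure S \<Longrightarrow> b \<in> closure S \<Longrightarrow> 0 \<le> t \<Longrightarrow> t \<le> 1 \<Longrightarrow>
   \<omega> (t *\<^sub>R a + (1 - t) *\<^sub>R b) \<le> t * \<omega> a + (1 - t) * \<omega> b"
proof -
  assume h: "a \<in> closure S" "b \<in> closure S" "0 \<le> t" "t \<le> 1"
  have "0 \<le> 1 / 2 * t * (1 - t) * (nrm (a - b))\<^sup>2" using h by simp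
  then show ?thesis using sc[OF h] by linarith
qed

lemma X_sub: "X \<subseteq> closure S"
proof -
  have "X = closure (rel_interior X)" using convex_closure_rel_interior[OF cvX] clX by (simp add: closure_closed)
  also have "\<dots> \<subseteq> closure S" using riS by (rule closure_mono)
  finally show ?thesis .
qed

lemma riX: "rel_interior X \<noteq> {}" using rel_interior_eq_empty[OF cvX] Xne by simp

lemma breg_nonneg:
  assumes x: "x \<in> S" and z: "z \<in> closure S"
  shows "0 \<le> bregman \<omega> g\<omega> z x"
proof (rule le_from_lim[OF tendsto_minus[OF lim_breg[where \<omega>=\<omega> and g\<omega>=g\<omega> and x=x and z=z, OF gd[OF x]], simplified]])
  fix s :: real assume s: "0 < s" "s < 1"
  have xc: "x \<in> closure S" using x closure_subset by auto
  have "\<omega> (s *\<^sub>R z + (1 - s) *\<^sub>R x) \<le> s * \<omega> z + (1 - s) * \<omega> x"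
    using cvx[OF z xc] s by simp
  moreover have "x + s *\<^sub>R (z - x) = s *\<^sub>R z + (1 - s) *\<^sub>R x" by (simp add: algebra_simps)
  ultimately have "bregman \<omega> g\<omega> (x + s *\<^sub>R (z - x)) x \<le> s * bregman \<omega> g\<omega> z x"
    by (simp add: bregman_def algebra_simps inner_diff_right)
  then have "bregman \<omega> g\<omega> (x + s *\<^sub>R (z - x)) x / s \<le> bregman \<omega> g\<omega> z x"
    using s by (simp add: field_simps)
  then show "0 \<le> bregman \<omega> g\<omega> z x + - (bregman \<omega> g\<omega> (x + s *\<^sub>R (z - x)) x / s)" by simp
qed

lemma breg_cvx:
  assumes "a \<in> closure S" "b \<in> closure S" "0 \<le> t" "t \<le> 1"
  shows "bregman \<omega> g\<omega> (t *\<^sub>R a + (1 - t) *\<^sub>R b) x \<le> t * bregman \<omega> g\<omega> a x + (1 - t) * bregman \<omega> g\<omega> b x"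
  using cvx[OF assms] by (simp add: bregman_def algebra_simps inner_diff_right)

lemma sc_min:
  fixes h :: "'a \<Rightarrow> real"
  assumes A: "convex A"
    and hs: "\<And>a b t. a \<in> A \<Longrightarrow> b \<in> A \<Longrightarrow> 0 \<le> t \<Longrightarrow> t \<le> 1 \<Longrightarrow>
        h (t *\<^sub>R a + (1 - t) *\<^sub>R b) \<le> t * h a + (1 - t) * h b - 1 / 2 * t * (1 - t) * (nrm (a - b))\<^sup>2"
    and m: "m \<in> A" and mmin: "\<And>z. z \<in> A \<Longrightarrow> h m \<le> h z" and z: "z \<in> A"
  shows "h m + 1 / 2 * (nrm (z - m))\<^sup>2 \<le> h z"
proof -
  let ?n = "(nrm (z - m))\<^sup>2"
  have key: "1 / 2 * (1 - t) * ?n \<le> h z - h m" if t: "0 < t" "t < 1" for t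
  proof -
    have "t *\<^sub>R z + (1 - t) *\<^sub>R m \<in> A" using A m z t by (simp add: convex_def)
    then have "h m \<le> h (t *\<^sub>R z + (1 - t) *\<^sub>R m)" by (rule mmin)
    also have "\<dots> \<le> t * h z + (1 - t) * h m - 1 / 2 * t * (1 - t) * ?n" using hs[OF z m] t by simp
    finally have "t * (1 / 2 * (1 - t) * ?n) \<le> t * (h z - h m)" by (simp add: algebra_simps)
    then show ?thesis using t by simp
  qed
  have q: "((\<lambda>t. 1 / 2 * t * ?n) \<longlongrightarrow> 1 / 2 * 0 * ?n) (at_right 0)" by (intro tendsto_intros)
  have "1 / 2 * ?n \<le> h z - h m"
  proof (rule le_from_lim[of "\<lambda>t. 1 / 2 * t * ?n"])
    show "((\<lambda>t. 1 / 2 * t * ?n) \<longlongrightarrow> 0) (at_right 0)" using q by simp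
    fix t :: real assume "0 < t" "t < 1"
    have "1 / 2 * (1 - t) * ?n = 1 / 2 * ?n - 1 / 2 * t * ?n" by (simp add: left_diff_distrib right_diff_distrib)
    then show "1 / 2 * ?n \<le> h z - h m + 1 / 2 * t * ?n" using key[of t] \<open>0 < t\<close> \<open>t < 1\<close> by linarith
  qed
  then show ?thesis by simp
qed

definition hobj :: "real \<Rightarrow> 'a \<Rightarrow> ('a \<Rightarrow> real) \<Rightarrow> 'a \<Rightarrow> 'a \<Rightarrow> real" where
  "hobj \<eta> v r x z = \<eta> * (v \<bullet> z + r z) + bregman \<omega> g\<omega> z x"

lemma hobj_sc:
  assumes r: "convex_on UNIV r" and eta: "0 \<le> \<eta>"
    and a: "a \<in> X" and b: "b \<in> X" and t: "0 \<le> t" "t \<le> 1"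
  shows "hobj \<eta> v r x (t *\<^sub>R a + (1 - t) *\<^sub>R b) \<le> t * hobj \<eta> v r x a + (1 - t) * hobj \<eta> v r x b
     - 1 / 2 * t * (1 - t) * (nrm (a - b))\<^sup>2"
proof -
  have ac: "a \<in> closure S" "b \<in> closure S" using a b X_sub by auto
  have "r ((1 - t) *\<^sub>R b + t *\<^sub>R a) \<le> (1 - t) * r b + t * r a"
    using convex_onD[OF r, of t b a] t by simp
  then have rr: "r (t *\<^sub>R a + (1 - t) *\<^sub>R b) \<le> t * r a + (1 - t) * r b"
    by (simp add: add.commute)
  have "\<eta> * r (t *\<^sub>R a + (1 - t) *\<^sub>R b) \<le> \<eta> * (t * r a + (1 - t) * r b)"
    using rr eta by (rule mult_left_mono)
  moreover have o: "\<omega> (t *\<^sub>R a + (1 - t) *\<^sub>R b) \<le> t * \<omega> a + (1 - t) * \<omega> b - 1 / 2 * t * (1 - t) * (nrm (a - b))\<^sup>2"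
    using sc[OF ac t] .
  ultimately show ?thesis
    by (simp add: hobj_def bregman_def algebra_simps inner_diff_right inner_add_right)
qed

lemma hobj_min_norm:
  assumes r: "convex_on UNIV r" and eta: "0 \<le> \<eta>"
    and m: "m \<in> X" and mmin: "\<And>z. z \<in> X \<Longrightarrow> hobj \<eta> v r x m \<le> hobj \<eta> v r x z" and z: "z \<in> X"
  shows "hobj \<eta> v r x m + 1 / 2 * (nrm (z - m))\<^sup>2 \<le> hobj \<eta> v r x z"
  by (rule sc_min[OF cvX hobj_sc[OF r eta] m mmin z])

lemma hobj_min_breg:
  assumes r: "convex_on UNIV r" and eta: "0 \<le> \<eta>"
    and m: "m \<in> X" "m \<in> S" and mmin: "\<And>z. z \<in> X \<Longrightarrow> hobj \<eta> v r x m \<le> hobj \<eta> v r x z" and z: "z \<in> X"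
  shows "hobj \<eta> v r x m + bregman \<omega> g\<omega> z m \<le> hobj \<eta> v r x z"
proof -
  define \<phi> where "\<phi> = (\<lambda>z. hobj \<eta> v r x z - bregman \<omega> g\<omega> z m)"
  have \<phi>: "\<phi> z = \<eta> * (v \<bullet> z + r z) - \<omega> x - g\<omega> x \<bullet> (z - x) + \<omega> m + g\<omega> m \<bullet> (z - m)" for z
    by (simp add: \<phi>_def hobj_def bregman_def)
  have \<phi>m: "\<phi> m = hobj \<eta> v r x m" by (simp add: \<phi>_def bregman_def)
  have \<phi>c: "\<phi> (s *\<^sub>R z + (1 - s) *\<^sub>R m) \<le> s * \<phi> z + (1 - s) * \<phi> m" if s: "0 \<le> s" "s \<le> 1" for s
  proof -
    have "r ((1 - s) *\<^sub>R m + s *\<^sub>R z) \<le> (1 - s) * r m + s * r z"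
      using convex_onD[OF r, of s m z] s by simp
    then have rr: "r (s *\<^sub>R z + (1 - s) *\<^sub>R m) \<le> s * r z + (1 - s) * r m"
      by (simp add: add.commute)
    have "\<eta> * r (s *\<^sub>R z + (1 - s) *\<^sub>R m) \<le> \<eta> * (s * r z + (1 - s) * r m)"
      using rr eta by (rule mult_left_mono)
    then show ?thesis unfolding \<phi>
      by (simp add: algebra_simps inner_diff_right inner_add_right)
  qed
  show ?thesis
  proof -
    have "hobj \<eta> v r x m \<le> \<phi> z"
    proof (rule le_from_lim[OF lim_breg[where \<omega>=\<omega> and g\<omega>=g\<omega> and x=m and z=z, OF gd[OF m(2)]]])
      fix s :: real assume s: "0 < s" "s < 1"
      have e: "m + s *\<^sub>R (z - m) = s *\<^sub>R z + (1 - s) *\<^sub>R m" by (simp add: algebra_simps)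
      have "s *\<^sub>R z + (1 - s) *\<^sub>R m \<in> X" using cvX m z s by (simp add: convex_def)
      then have "hobj \<eta> v r x m \<le> hobj \<eta> v r x (s *\<^sub>R z + (1 - s) *\<^sub>R m)" by (rule mmin)
      also have "\<dots> = \<phi> (s *\<^sub>R z + (1 - s) *\<^sub>R m) + bregman \<omega> g\<omega> (m + s *\<^sub>R (z - m)) m"
        by (simp add: \<phi>_def e)
      also have "\<dots> \<le> s * \<phi> z + (1 - s) * hobj \<eta> v r x m + bregman \<omega> g\<omega> (m + s *\<^sub>R (z - m)) m"
        using \<phi>c[of s] s \<phi>m by simp
      finally have "s * hobj \<eta> v r x m \<le> s * \<phi> z + bregman \<omega> g\<omega> (m + s *\<^sub>R (z - m)) m"
        by (simp add: algebra_simps)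
      then show "hobj \<eta> v r x m \<le> \<phi> z + bregman \<omega> g\<omega> (m + s *\<^sub>R (z - m)) m / s"
        using s by (simp add: field_simps)
    qed
    then show ?thesis by (simp add: \<phi>_def)
  qed
qed

end


locale smd =
  fixes X S :: "'a::euclidean_space set" and nrm \<omega> and g\<omega> :: "'a \<Rightarrow> 'a"
    and f :: "'a \<Rightarrow> 'b \<Rightarrow> real" and F gradF g and P :: "'b measure" and r L \<sigma> x0 \<eta> xs
  assumes inst: "SMD_instance X S nrm \<omega> g\<omega> f F gradF g P r L \<sigma> x0 \<eta> xs"
begin

lemma facts_1: "closed X"
  using inst unfolding SMD_instance_def by (elim conjE) assumption
lemma facts_2: "convex X"
  using inst unfolding SMD_instance_def by (elim conjE) assumption
lemma facts_3: "is_norm nrm"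
  using inst unfolding SMD_instance_def by (elim conjE) assumption
lemma facts_4: "is_DGF nrm X S \<omega> g\<omega>"
  using inst unfolding SMD_instance_def by (elim conjE) assumption
lemma facts_5: "prob_space P"
  using inst unfolding SMD_instance_def by (elim conjE) assumption
lemma facts_6: "\<And>x. x \<in> X \<Longrightarrow> integrable P (f x) \<and> F x = (\<integral>\<xi>. f x \<xi> \<partial>P)"
  using inst unfolding SMD_instance_def by (elim conjE) blast
lemma facts_7: "\<And>x. GDERIV F x :> gradF x"
  using inst unfolding SMD_instance_def by (elim conjE) blast
lemma facts_8: "convex_on UNIV r"
  using inst unfolding SMD_instance_def by (elim conjE) assumption
lemma facts_9: "bdd_below ((\<lambda>x. F x + r x) ` X)"
  using inst unfolding SMD_instance_def by (elim conjE) assumption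
lemma facts_10: "L > 0"
  using inst unfolding SMD_instance_def by (elim conjE) assumption
lemma facts_11: "rel_smooth F gradF \<omega> g\<omega> L (X \<inter> S)"
  using inst unfolding SMD_instance_def by (elim conjE) assumption
lemma facts_12: "\<And>\<rho> x. \<rho> > 0 \<Longrightarrow> x \<in> X \<inter> S \<Longrightarrow> \<exists>y\<in>X. \<forall>z\<in>X.
         F y + r y + \<rho> * bregman \<omega> g\<omega> y x \<le> F z + r z + \<rho> * bregman \<omega> g\<omega> z x"
  using inst unfolding SMD_instance_def by (elim conjE) blast
lemma facts_13: "\<And>\<rho> x. \<rho> > 0 \<Longrightarrow> x \<in> X \<inter> S \<Longrightarrow> \<exists>y\<in>X. \<forall>z\<in>X.
         fbe_Q gradF r \<omega> g\<omega> \<rho> x y \<le> fbe_Q gradF r \<omega> g\<omega> \<rho> x z"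
  using inst unfolding SMD_instance_def by (elim conjE) blast
lemma facts_14: "\<And>x. x \<in> X \<Longrightarrow> integrable P (g x) \<and> (\<integral>\<xi>. g x \<xi> \<partial>P) = gradF x"
  using inst unfolding SMD_instance_def by (elim conjE) blast
lemma facts_15: "\<And>x. x \<in> X \<Longrightarrow> (\<integral>\<^sup>+\<xi>. ennreal ((dual_norm nrm (g x \<xi> - gradF x))\<^sup>2) \<partial>P) \<le> ennreal (\<sigma>\<^sup>2)"
  using inst unfolding SMD_instance_def by (elim conjE) blast
lemma facts_16: "\<And>t. 0 < \<eta> t"
  using inst unfolding SMD_instance_def by (elim conjE) blast
lemma facts_17: "\<And>t. \<eta> (Suc t) \<le> \<eta> t"
  using inst unfolding SMD_instance_def by (elim conjE) blast
lemma facts_18: "\<eta> 0 \<le> 1 / (2 * L)"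
  using inst unfolding SMD_instance_def by (elim conjE) assumption
lemma facts_19: "x0 \<in> X \<inter> S"
  using inst unfolding SMD_instance_def by (elim conjE) assumption
lemma facts_20: "\<And>t. xs t \<in> borel_measurable (sample_space P)"
  using inst unfolding SMD_instance_def by (elim conjE) blast
lemma facts_21: "\<And>w. w \<in> space (sample_space P) \<Longrightarrow> xs 0 w = x0"
  using inst unfolding SMD_instance_def by (elim conjE) blast
lemma facts_22: "\<And>w t. w \<in> space (sample_space P) \<Longrightarrow> xs (Suc t) w \<in> X \<inter> S"
  using inst unfolding SMD_instance_def by (elim conjE) blast
lemma facts_23: "\<And>w t z. w \<in> space (sample_space P) \<Longrightarrow> z \<in> X \<Longrightarrow>
      \<eta> t * (g (xs t w) (w t) \<bullet> xs (Suc t) w + r (xs (Suc t) w)) + bregman \<omega> g\<omega> (xs (Suc t) w) (xs t w)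
                   \<le> \<eta> t * (g (xs t w) (w t) \<bullet> z + r z) + bregman \<omega> g\<omega> z (xs t w)"
  using inst unfolding SMD_instance_def by (elim conjE) blast
lemmas facts = facts_1 facts_2 facts_3 facts_4 facts_5 facts_6 facts_7 facts_8 facts_9 facts_10 facts_11 facts_12 facts_13 facts_14 facts_15 facts_16 facts_17 facts_18 facts_19 facts_20 facts_21 facts_22 facts_23


sublocale geo X S nrm \<omega> g\<omega>
  using facts(1-4,19) by unfold_locales auto

definition "\<Phi> x = F x + r x"
definition "\<Phi>s = Inf (\<Phi> ` X)"
definition "Mo x = bregman_moreau \<Phi> \<omega> g\<omega> X (2 * L) x"
definition "Dfb x = bregman_fbe gradF r \<omega> g\<omega> X (3 * L) x"

lemma Lpos: "L > 0" by (rule facts)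

lemma Phi_ge: "y \<in> X \<Longrightarrow> \<Phi>s \<le> \<Phi> y"
  unfolding \<Phi>s_def using facts(9) by (intro cInf_lower) (auto simp: \<Phi>_def[abs_def])

lemma F_cont: "continuous_on UNIV F"
proof -
  have "\<And>x. isCont F x" using facts(7) unfolding gderiv_def by (metis has_derivative_continuous)
  then show ?thesis by (simp add: continuous_on_eq_continuous_at)
qed

lemma smooth_ext:
  assumes x: "x \<in> X \<inter> S" and z: "z \<in> X"
  shows "\<bar>F z - F x - gradF x \<bullet> (z - x)\<bar> \<le> L * bregman \<omega> g\<omega> z x"
proof -
  obtain c where c: "c \<in> rel_interior X" using riX by blast
  have cX: "c \<in> X" using c rel_interior_subset by auto
  let ?z = "\<lambda>e::real. z - e *\<^sub>R (z - c)"
  let ?a = "\<lambda>e. \<bar>F (?z e) - F x - gradF x \<bullet> (?z e - x)\<bar>"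
  let ?b = "\<lambda>e. L * ((1 - e) * bregman \<omega> g\<omega> z x + e * bregman \<omega> g\<omega> c x)"
  have zl: "(?z \<longlongrightarrow> z - 0 *\<^sub>R (z - c)) (at_right 0)" by (intro tendsto_intros)
  have Fl: "((\<lambda>e. F (?z e)) \<longlongrightarrow> F z) (at_right 0)"
    using isCont_tendsto_compose[of z F, OF _ zl[simplified]] F_cont
    by (simp add: continuous_on_eq_continuous_at)
  have al: "(?a \<longlongrightarrow> \<bar>F z - F x - gradF x \<bullet> (z - x)\<bar>) (at_right 0)"
    by (intro tendsto_intros Fl zl[simplified])
  have bl: "(?b \<longlongrightarrow> L * ((1 - 0) * bregman \<omega> g\<omega> z x + 0 * bregman \<omega> g\<omega> c x)) (at_right 0)"
    by (intro tendsto_intros)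
  have ev: "eventually (\<lambda>e. ?a e \<le> ?b e) (at_right (0::real))"
    unfolding eventually_at_right[OF zero_less_one]
  proof (intro exI[of _ 1] conjI allI impI zero_less_one)
    fix e :: real assume e: "0 < e" "e < 1"
    have zr: "?z e \<in> rel_interior X"
      using rel_interior_closure_convex_shrink[OF cvX c, of z e] z e closure_subset by auto
    then have zXS: "?z e \<in> X \<inter> S" using riS rel_interior_subset by auto
    have "- L * bregman \<omega> g\<omega> (?z e) x \<le> F (?z e) - F x - gradF x \<bullet> (?z e - x) \<and>
          F (?z e) - F x - gradF x \<bullet> (?z e - x) \<le> L * bregman \<omega> g\<omega> (?z e) x"
      using facts(11) zXS x unfolding rel_smooth_def by blast
    then have "?a e \<le> L * bregman \<omega> g\<omega> (?z e) x"
      unfolding abs_le_iff by linarith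
    also have "bregman \<omega> g\<omega> (?z e) x \<le> (1 - e) * bregman \<omega> g\<omega> z x + (1 - (1 - e)) * bregman \<omega> g\<omega> c x"
    proof -
      have "?z e = (1 - e) *\<^sub>R z + (1 - (1 - e)) *\<^sub>R c" by (simp add: algebra_simps)
      then show ?thesis using breg_cvx[of z c "1 - e" x] z cX X_sub e by auto
    qed
    finally show "?a e \<le> ?b e" using Lpos by (simp add: mult_left_mono)
  qed
  show ?thesis using tendsto_le[OF trivial_limit_at_right_real bl al ev] by simp
qed

end


lemma comb:
  fixes Mxp Py Dyp Dyx Dpx T Pxp N B Mx Df Px L e :: real
  assumes L: "0 < L" and e: "0 < e" "e * L \<le> 1 / 2"
  and P1: "Mxp \<le> Py + 2 * L * Dyp"
  and P2: "Dyp \<le> Dyx - Dpx + e * T"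
  and P3: "T \<le> Py - Pxp + L * Dyx + L * Dpx + N + e * B"
  and P4: "Mx = Py + 2 * L * Dyx"
  and P5: "0 \<le> Dyx" "0 \<le> Dpx"
  and P6: "Df \<le> 6 * L * (Px - Mx)"
  shows "Mxp + 2 * L * e * Pxp + e / 3 * Df \<le> Mx + 2 * L * e * Px + 2 * L * e * N + 2 * L * e\<^sup>2 * B"
proof -
  have a: "e * T \<le> e * (Py - Pxp + L * Dyx + L * Dpx + N + e * B)" using P3 e by (simp add: mult_left_mono)
  have b: "Dyp \<le> Dyx - Dpx + e * (Py - Pxp + L * Dyx + L * Dpx + N + e * B)" using P2 a by linarith
  have c: "2 * L * Dyp \<le> 2 * L * (Dyx - Dpx + e * (Py - Pxp + L * Dyx + L * Dpx + N + e * B))"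
    using b L by (simp add: mult_left_mono)
  have d: "e / 3 * Df \<le> e / 3 * (6 * L * (Px - Mx))" using P6 e by (simp add: mult_left_mono)
  have f1: "(e * L) * Dpx \<le> (1/2) * Dpx" using mult_right_mono[OF e(2) P5(2)] by simp
  have f2: "2 * L * (e * L * Dpx) \<le> 2 * L * ((1/2) * Dpx)" using f1 L by (simp add: mult_left_mono)
  have f3: "0 \<le> 2 * L * (e * L * Dyx)" using L e P5 by simp
  have c': "2*(L*Dyp) \<le> 2*(L*Dyx) - 2*(L*Dpx) + 2*(L*e*Py) - 2*(L*e*Pxp) + 2*(L*e*L*Dyx) + 2*(L*e*L*Dpx) + 2*(L*e*N) + 2*(L*e*e*B)"
    using c by (simp add: algebra_simps)
  have P1': "Mxp \<le> Py + 2*(L*Dyp)" using P1 by (simp add: algebra_simps)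
  have P4': "Mx = Py + 2*(L*Dyx)" using P4 by (simp add: algebra_simps)
  have e1: "L*e*Mx = L*e*Py + 2*(L*e*L*Dyx)" using P4 by (simp add: algebra_simps)
  have d': "e/3*Df \<le> 2*(L*e*Px) - 2*(L*e*Mx)" using d by (simp add: algebra_simps)
  have f2': "2*(L*e*L*Dpx) \<le> L*Dpx" using f2 by (simp add: algebra_simps)
  have f4: "0 \<le> L*Dpx" using L P5 by simp
  have f3': "0 \<le> L*e*L*Dyx" using f3 by (simp add: algebra_simps)
  have g: "Mxp + 2*(L*e*Pxp) + e/3*Df \<le> Mx + 2*(L*e*Px) + 2*(L*e*N) + 2*(L*e*e*B)"
    using c' P1' P4' e1 d' f2' f4 f3' by linarith
  then show ?thesis by (simp add: algebra_simps power2_eq_square)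
qed

lemma stab_arith:
  fixes a b e c :: real
  assumes "0 \<le> a" "0 \<le> b" "0 < e" "a\<^sup>2 \<le> e * c" "c \<le> b * a"
  shows "c \<le> e * b\<^sup>2"
proof (cases "a = 0")
  case True
  then have "c \<le> 0" using assms(5) by simp
  moreover have "0 \<le> e * b\<^sup>2" using assms(3) by simp
  ultimately show ?thesis by linarith
next
  case False
  then have ap: "0 < a" using assms by simp
  have "e * c \<le> e * (b * a)" using assms by (simp add: mult_left_mono)
  then have "a\<^sup>2 \<le> e * (b * a)" using assms(4) by linarith
  then have "a * a \<le> a * (e * b)" by (simp add: power2_eq_square ac_simps)
  then have ab: "a \<le> e * b" using ap by simp
  have "c \<le> b * a" by fact
  also have "\<dots> \<le> b * (e * b)" using ab assms by (simp add: mult_left_mono)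
  finally show ?thesis by (simp add: power2_eq_square algebra_simps)
qed

context smd begin

lemma mo_eq:
  assumes x: "x \<in> X \<inter> S" and y: "y \<in> X" and ymin: "\<forall>z\<in>X. \<Phi> y + 2 * L * bregman \<omega> g\<omega> y x \<le> \<Phi> z + 2 * L * bregman \<omega> g\<omega> z x"
  shows "Mo x = \<Phi> y + 2 * L * bregman \<omega> g\<omega> y x"
  unfolding Mo_def bregman_moreau_def
  by (rule cInf_eq_minimum) (use y ymin in auto)

lemma mo_ex: "x \<in> X \<inter> S \<Longrightarrow> \<exists>y. y \<in> X \<and> (\<forall>z\<in>X. \<Phi> y + 2 * L * bregman \<omega> g\<omega> y x \<le> \<Phi> z + 2 * L * bregman \<omega> g\<omega> z x)"
  using facts(12)[of "2 * L" x] Lpos by (auto simp: \<Phi>_def)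

definition "ymor x = (SOME y. y \<in> X \<and> (\<forall>z\<in>X. \<Phi> y + 2 * L * bregman \<omega> g\<omega> y x \<le> \<Phi> z + 2 * L * bregman \<omega> g\<omega> z x))"

lemma ymor: assumes "x \<in> X \<inter> S"
  shows "ymor x \<in> X" "\<forall>z\<in>X. \<Phi> (ymor x) + 2 * L * bregman \<omega> g\<omega> (ymor x) x \<le> \<Phi> z + 2 * L * bregman \<omega> g\<omega> z x"
  using someI_ex[OF mo_ex[OF assms]] unfolding ymor_def by blast+

lemma mo_val: "x \<in> X \<inter> S \<Longrightarrow> Mo x = \<Phi> (ymor x) + 2 * L * bregman \<omega> g\<omega> (ymor x) x"
  using mo_eq ymor by blast

lemma mo_le: "x \<in> X \<inter> S \<Longrightarrow> z \<in> X \<Longrightarrow> Mo x \<le> \<Phi> z + 2 * L * bregman \<omega> g\<omega> z x"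
  using mo_val ymor by auto

lemma mo_ge: assumes x: "x \<in> X \<inter> S" shows "\<Phi>s \<le> Mo x"
proof -
  have "0 \<le> bregman \<omega> g\<omega> (ymor x) x" using breg_nonneg ymor(1)[OF x] x X_sub by auto
  then have "0 \<le> 2 * L * bregman \<omega> g\<omega> (ymor x) x" using Lpos by simp
  then show ?thesis using mo_val[OF x] Phi_ge[OF ymor(1)[OF x]] by linarith
qed

definition "xhat e x = (SOME y. y \<in> X \<and> (\<forall>z\<in>X. fbe_Q gradF r \<omega> g\<omega> (1 / e) x y \<le> fbe_Q gradF r \<omega> g\<omega> (1 / e) x z))"

lemma xhat: assumes "x \<in> X \<inter> S" "0 < e"
  shows "xhat e x \<in> X" "\<forall>z\<in>X. fbe_Q gradF r \<omega> g\<omega> (1 / e) x (xhat e x) \<le> fbe_Q gradF r \<omega> g\<omega> (1 / e) x z"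
proof -
  have "\<exists>y. y \<in> X \<and> (\<forall>z\<in>X. fbe_Q gradF r \<omega> g\<omega> (1 / e) x y \<le> fbe_Q gradF r \<omega> g\<omega> (1 / e) x z)"
    using facts(13)[of "1 / e" x] assms by auto
  from someI_ex[OF this] show "xhat e x \<in> X" "\<forall>z\<in>X. fbe_Q gradF r \<omega> g\<omega> (1 / e) x (xhat e x) \<le> fbe_Q gradF r \<omega> g\<omega> (1 / e) x z"
    unfolding xhat_def by blast+
qed

lemma fb_bounds:
  assumes x: "x \<in> X \<inter> S"
  shows "0 \<le> Dfb x" "Dfb x \<le> 6 * L * (\<Phi> x - Mo x)"
proof -
  obtain y where y: "y \<in> X" "\<forall>z\<in>X. fbe_Q gradF r \<omega> g\<omega> (3 * L) x y \<le> fbe_Q gradF r \<omega> g\<omega> (3 * L) x z"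
    using facts(13)[of "3 * L" x] Lpos x by auto
  have D: "Dfb x = - 2 * (3 * L) * fbe_Q gradF r \<omega> g\<omega> (3 * L) x y"
    unfolding Dfb_def bregman_fbe_def
    by (subst cInf_eq_minimum[of "fbe_Q gradF r \<omega> g\<omega> (3 * L) x y"]) (use y in auto)
  have "fbe_Q gradF r \<omega> g\<omega> (3 * L) x y \<le> fbe_Q gradF r \<omega> g\<omega> (3 * L) x x" using y x by auto
  also have "\<dots> = 0" by (simp add: fbe_Q_def bregman_def)
  finally show "0 \<le> Dfb x" using D Lpos by (simp add: mult_le_0_iff)
  have sm: "\<bar>F y - F x - gradF x \<bullet> (y - x)\<bar> \<le> L * bregman \<omega> g\<omega> y x" by (rule smooth_ext[OF x y(1)])
  have "Mo x \<le> \<Phi> y + 2 * L * bregman \<omega> g\<omega> y x" by (rule mo_le[OF x y(1)])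
  also have "\<dots> - \<Phi> x \<le> fbe_Q gradF r \<omega> g\<omega> (3 * L) x y"
    using sm unfolding fbe_Q_def \<Phi>_def abs_le_iff by linarith
  finally have "Mo x - \<Phi> x \<le> fbe_Q gradF r \<omega> g\<omega> (3 * L) x y" by simp
  then have "6 * L * (Mo x - \<Phi> x) \<le> 6 * L * fbe_Q gradF r \<omega> g\<omega> (3 * L) x y"
    using Lpos by (simp add: mult_left_mono)
  then show "Dfb x \<le> 6 * L * (\<Phi> x - Mo x)" using D by (simp add: algebra_simps)
qed

lemma one_step:
  assumes x: "x \<in> X \<inter> S" and e: "0 < e" "e \<le> 1 / (2 * L)" and xp: "xp \<in> X \<inter> S"
    and mn: "\<forall>z\<in>X. e * (v \<bullet> xp + r xp) + bregman \<omega> g\<omega> xp x \<le> e * (v \<bullet> z + r z) + bregman \<omega> g\<omega> z x"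
  shows "Mo xp + 2 * L * e * \<Phi> xp + e / 3 * Dfb x \<le> Mo x + 2 * L * e * \<Phi> x
     + 2 * L * e * ((v - gradF x) \<bullet> (ymor x - xhat e x)) + 2 * L * e\<^sup>2 * (dual_norm nrm (v - gradF x))\<^sup>2"
proof -
  let ?G = "gradF x"
  define y where "y = ymor x"
  define xh where "xh = xhat e x"
  have yX: "y \<in> X" using ymor(1)[OF x] y_def by simp
  have xhX: "xh \<in> X" using xhat(1)[OF x e(1)] xh_def by simp
  have rc: "convex_on UNIV r" by (rule facts)
  have e0: "0 \<le> e" using e by simp
  have hmin: "\<And>z. z \<in> X \<Longrightarrow> hobj e v r x xp \<le> hobj e v r x z" using mn by (simp add: hobj_def)
  have s1: "Mo xp \<le> \<Phi> y + 2 * L * bregman \<omega> g\<omega> y xp" by (rule mo_le[OF xp yX])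
  have s2: "hobj e v r x xp + bregman \<omega> g\<omega> y xp \<le> hobj e v r x y"
    using hobj_min_breg[OF rc e0 _ _ hmin yX] xp by auto
  have s3: "\<bar>F xp - F x - ?G \<bullet> (xp - x)\<bar> \<le> L * bregman \<omega> g\<omega> xp x" using smooth_ext[OF x] xp by auto
  have s4: "\<bar>F y - F x - ?G \<bullet> (y - x)\<bar> \<le> L * bregman \<omega> g\<omega> y x" using smooth_ext[OF x yX] .
  have s5: "Mo x = \<Phi> y + 2 * L * bregman \<omega> g\<omega> y x" using mo_val[OF x] y_def by simp
  have s6: "0 \<le> bregman \<omega> g\<omega> y x" "0 \<le> bregman \<omega> g\<omega> xp x"
    using breg_nonneg x X_sub yX xp by auto
  have s8: "Dfb x \<le> 6 * L * (\<Phi> x - Mo x)" by (rule fb_bounds[OF x])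
  have hGmin: "hobj e ?G r x xh \<le> hobj e ?G r x z" if z: "z \<in> X" for z
  proof -
    have q: "fbe_Q gradF r \<omega> g\<omega> (1 / e) x xh \<le> fbe_Q gradF r \<omega> g\<omega> (1 / e) x z"
      using xhat(2)[OF x e(1)] z xh_def by auto
    have eq: "hobj e ?G r x w = e * fbe_Q gradF r \<omega> g\<omega> (1 / e) x w + e * (?G \<bullet> x + r x)" for w
      using e by (simp add: hobj_def fbe_Q_def algebra_simps inner_diff_right)
    show ?thesis unfolding eq using q e by (simp add: mult_left_mono)
  qed
  have n1: "hobj e v r x xp + 1 / 2 * (nrm (xh - xp))\<^sup>2 \<le> hobj e v r x xh"
    using hobj_min_norm[OF rc e0 _ hmin xhX] xp by auto
  have n2: "hobj e ?G r x xh + 1 / 2 * (nrm (xp - xh))\<^sup>2 \<le> hobj e ?G r x xp"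
    using hobj_min_norm[OF rc e0 xhX hGmin] xp by auto
  have nc: "nrm (xp - xh) = nrm (xh - xp)" using isn_commute[OF nrm] .
  have n3: "(nrm (xh - xp))\<^sup>2 \<le> e * ((v - ?G) \<bullet> (xh - xp))"
    using n1 n2 unfolding nc by (simp add: hobj_def algebra_simps inner_diff_left inner_diff_right)
  have "\<forall>z u. nrm u \<le> 1 \<longrightarrow> z \<bullet> u \<le> dual_norm nrm z" using dn_facts[OF nrm] by blast
  then have "(v - ?G) \<bullet> 0 \<le> dual_norm nrm (v - ?G)" using isn_zero[OF nrm] by (metis order_refl zero_le_one)
  then have dn0: "0 \<le> dual_norm nrm (v - ?G)" by simp
  have s7: "(v - ?G) \<bullet> (xh - xp) \<le> e * (dual_norm nrm (v - ?G))\<^sup>2"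
    by (rule stab_arith[OF isn_nonneg[OF nrm] dn0 e(1) n3 ]) (use dn_cs[OF nrm, of "v - ?G" "xh - xp"] in \<open>simp add: ac_simps\<close>)
  define T where "T = v \<bullet> (y - xp) + r y - r xp"
  have P2: "bregman \<omega> g\<omega> y xp \<le> bregman \<omega> g\<omega> y x - bregman \<omega> g\<omega> xp x + e * T"
    using s2 unfolding T_def hobj_def by (simp add: algebra_simps inner_diff_right)
  have P3: "T \<le> \<Phi> y - \<Phi> xp + L * bregman \<omega> g\<omega> y x + L * bregman \<omega> g\<omega> xp x
       + (v - ?G) \<bullet> (y - xh) + e * (dual_norm nrm (v - ?G))\<^sup>2"
    using s3 s4 s7 unfolding T_def \<Phi>_def abs_le_iff
    by (simp add: inner_diff_left inner_diff_right)
  have eL: "e * L \<le> 1 / 2" using e Lpos by (simp add: field_simps)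
  show ?thesis
    using comb[OF Lpos e(1) eL s1 P2 P3 s5 s6 s8] y_def xh_def by simp
qed

end


context smd begin

abbreviation "\<Omega> \<equiv> sample_space P"

lemma PP: "prob_space P" by (rule facts)
lemma PO: "prob_space \<Omega>" by (rule prob_space_PiM) (use PP in auto)

lemma spaceO: "w \<in> space \<Omega> \<longleftrightarrow> (\<forall>i. w i \<in> space P)"
  by (simp add: space_PiM PiE_def Pi_def)

lemma upd_space: "w \<in> space \<Omega> \<Longrightarrow> \<xi> \<in> space P \<Longrightarrow> w(t := \<xi>) \<in> space \<Omega>"
  by (simp add: spaceO)

lemma xs_in: "w \<in> space \<Omega> \<Longrightarrow> xs t w \<in> X \<inter> S"
  using facts(19,21,22) by (cases t) auto

lemma xs_min: "w \<in> space \<Omega> \<Longrightarrow> z \<in> X \<Longrightarrow>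
   hobj (\<eta> t) (g (xs t w) (w t)) r (xs t w) (xs (Suc t) w) \<le> hobj (\<eta> t) (g (xs t w) (w t)) r (xs t w) z"
  using facts(23) by (simp add: hobj_def)

lemma argmin_unique:
  assumes e: "0 \<le> e" and a: "a \<in> X" "\<And>z. z \<in> X \<Longrightarrow> hobj e v r x a \<le> hobj e v r x z"
    and b: "b \<in> X" "\<And>z. z \<in> X \<Longrightarrow> hobj e v r x b \<le> hobj e v r x z"
  shows "a = b"
proof -
  have "hobj e v r x a + 1 / 2 * (nrm (b - a))\<^sup>2 \<le> hobj e v r x b"
    by (rule hobj_min_norm[OF facts(8) e a b(1)])
  moreover have "hobj e v r x b \<le> hobj e v r x a" using b(2) a(1) .
  ultimately have "(nrm (b - a))\<^sup>2 \<le> 0" by linarith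
  then have "(nrm (b - a))\<^sup>2 = 0" using zero_le_power2[of "nrm (b - a)"] by linarith
  then have "nrm (b - a) = 0" by simp
  then show ?thesis using isn_eq0[OF nrm] by simp
qed

lemma eta_le0: "\<eta> t \<le> \<eta> 0"
proof (induction t)
  case (Suc t) then show ?case using facts(17)[of t] by linarith
qed simp

lemma eta_ok: "0 < \<eta> t" "\<eta> t \<le> 1 / (2 * L)"
  using facts(16)[of t] eta_le0[of t] facts(18) by auto

lemma xs_dep: "w \<in> space \<Omega> \<Longrightarrow> w' \<in> space \<Omega> \<Longrightarrow> (\<forall>i<t. w i = w' i) \<Longrightarrow> xs t w = xs t w'"
proof (induction t)
  case 0 then show ?case using facts(21) by simp
next
  case (Suc t)
  then have e1: "xs t w = xs t w'" and e2: "w t = w' t" by auto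
  show ?case
  proof (rule argmin_unique[where e="\<eta> t" and v="g (xs t w) (w t)" and x="xs t w"])
    show "0 \<le> \<eta> t" using eta_ok(1)[of t] by simp
    show "xs (Suc t) w \<in> X" "xs (Suc t) w' \<in> X" using xs_in Suc.prems by auto
    show "\<And>z. z \<in> X \<Longrightarrow> hobj (\<eta> t) (g (xs t w) (w t)) r (xs t w) (xs (Suc t) w) \<le> hobj (\<eta> t) (g (xs t w) (w t)) r (xs t w) z"
      using xs_min Suc.prems by blast
    show "\<And>z. z \<in> X \<Longrightarrow> hobj (\<eta> t) (g (xs t w) (w t)) r (xs t w) (xs (Suc t) w') \<le> hobj (\<eta> t) (g (xs t w) (w t)) r (xs t w) z"
      unfolding e1 e2 using xs_min Suc.prems by blast
  qed
qed

lemma xs_upd: "w \<in> space \<Omega> \<Longrightarrow> \<xi> \<in> space P \<Longrightarrow> s \<le> t \<Longrightarrow> xs s (w(t := \<xi>)) = xs s w"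
  by (rule xs_dep) (auto simp: upd_space)

definition "Vt t w = Mo (xs t w) - \<Phi>s + 2 * L * \<eta> t * (\<Phi> (xs t w) - \<Phi>s)"
definition "St t w = (\<Sum>s<t. \<eta> s / 3 * Dfb (xs s w))"

lemma Vt_nonneg: "w \<in> space \<Omega> \<Longrightarrow> 0 \<le> Vt t w"
proof -
  assume w: "w \<in> space \<Omega>"
  have "\<Phi>s \<le> Mo (xs t w)" "\<Phi>s \<le> \<Phi> (xs t w)" using mo_ge Phi_ge xs_in[OF w] by auto
  moreover have "0 \<le> 2 * L * \<eta> t" using Lpos eta_ok(1)[of t] by simp
  ultimately show ?thesis unfolding Vt_def by simp
qed

lemma St_nonneg: "w \<in> space \<Omega> \<Longrightarrow> 0 \<le> St t w"
  unfolding St_def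
proof (intro sum_nonneg)
  fix s assume w: "w \<in> space \<Omega>"
  have "0 \<le> Dfb (xs s w)" using fb_bounds(1)[OF xs_in[OF w]] .
  moreover have "0 < \<eta> s" by (rule eta_ok(1))
  ultimately show "0 \<le> \<eta> s / 3 * Dfb (xs s w)" by simp
qed

lemma gmeas: "x \<in> X \<Longrightarrow> g x \<in> borel_measurable P"
  using facts(14) borel_measurable_integrable by blast

lemma step_int:
  fixes t :: nat
  assumes w: "w \<in> space \<Omega>" and A: "0 \<le> A" and k: "0 < k"
  shows "(\<integral>\<^sup>+\<xi>. ennreal (k * (Vt (Suc t) (w(t := \<xi>)) + St (Suc t) (w(t := \<xi>)) + A)) \<partial>P)
     \<le> ennreal (k * (Vt t w + St t w + A + 2 * L * (\<eta> t)\<^sup>2 * \<sigma>\<^sup>2))"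
proof -
  interpret P: prob_space P by (rule PP)
  define x where "x = xs t w"
  define e where "e = \<eta> t"
  have x: "x \<in> X \<inter> S" using xs_in[OF w] x_def by simp
  have e: "0 < e" "e \<le> 1 / (2 * L)" using eta_ok e_def by auto
  define u where "u = ymor x - xhat e x"
  let ?G = "gradF x"
  define N where "N = (\<lambda>\<xi>. (g x \<xi> - ?G) \<bullet> u)"
  define D2 where "D2 = (\<lambda>\<xi>. (dual_norm nrm (g x \<xi> - ?G))\<^sup>2)"
  define C where "C = Vt t w + St t w + A"
  define R where "R = (\<lambda>\<xi>. k * (C + (2 * L * e) * N \<xi> + (2 * L * e\<^sup>2) * D2 \<xi>))"
  have ptw: "k * (Vt (Suc t) (w(t := \<xi>)) + St (Suc t) (w(t := \<xi>)) + A) \<le> R \<xi>"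
    and ptw0: "0 \<le> k * (Vt (Suc t) (w(t := \<xi>)) + St (Suc t) (w(t := \<xi>)) + A)"
    if \<xi>: "\<xi> \<in> space P" for \<xi>
  proof -
    let ?w = "w(t := \<xi>)"
    have w': "?w \<in> space \<Omega>" using upd_space[OF w \<xi>] .
    have xt: "xs t ?w = x" using xs_upd[OF w \<xi>, of t] x_def by simp
    define xp where "xp = xs (Suc t) ?w"
    have xp: "xp \<in> X \<inter> S" using xs_in[OF w'] xp_def by simp
    have mn: "\<forall>z\<in>X. e * (g x \<xi> \<bullet> xp + r xp) + bregman \<omega> g\<omega> xp x \<le> e * (g x \<xi> \<bullet> z + r z) + bregman \<omega> g\<omega> z x"
      using facts(23)[where t=t, OF w'] xt unfolding xp_def e_def by simp
    have os: "Mo xp + 2 * L * e * \<Phi> xp + e / 3 * Dfb x \<le> Mo x + 2 * L * e * \<Phi> x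
       + 2 * L * e * N \<xi> + 2 * L * e\<^sup>2 * D2 \<xi>"
      using one_step[OF x e xp mn] unfolding N_def D2_def u_def by simp
    have St: "St (Suc t) ?w = St t w + e / 3 * Dfb x"
    proof -
      have "St (Suc t) ?w = (\<Sum>s<t. \<eta> s / 3 * Dfb (xs s ?w)) + \<eta> t / 3 * Dfb (xs t ?w)"
        by (simp add: St_def)
      also have "(\<Sum>s<t. \<eta> s / 3 * Dfb (xs s ?w)) = St t w"
        unfolding St_def using xs_upd[OF w \<xi>] by (intro sum.cong) auto
      finally show ?thesis by (simp only: xt e_def)
    qed
    have "\<Phi>s \<le> \<Phi> xp" using Phi_ge xp by auto
    then have "2 * L * \<eta> (Suc t) * (\<Phi> xp - \<Phi>s) \<le> 2 * L * e * (\<Phi> xp - \<Phi>s)"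
      using facts(17)[of t] Lpos e_def by (intro mult_right_mono) auto
    then have V: "Vt (Suc t) ?w \<le> Mo xp - \<Phi>s + 2 * L * e * (\<Phi> xp - \<Phi>s)"
      unfolding Vt_def xp_def by simp
    have Vt: "Vt t w = Mo x - \<Phi>s + 2 * L * e * (\<Phi> x - \<Phi>s)" unfolding Vt_def x_def e_def by simp
    have q1: "2 * L * e * (\<Phi> xp - \<Phi>s) = 2 * L * e * \<Phi> xp - 2 * L * e * \<Phi>s" by (simp add: right_diff_distrib)
    have q2: "2 * L * e * (\<Phi> x - \<Phi>s) = 2 * L * e * \<Phi> x - 2 * L * e * \<Phi>s" by (simp add: right_diff_distrib)
    have "Vt (Suc t) ?w + St (Suc t) ?w + A \<le> C + (2 * L * e) * N \<xi> + (2 * L * e\<^sup>2) * D2 \<xi>"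
      unfolding C_def using V os St Vt q1 q2 by linarith
    then show "k * (Vt (Suc t) ?w + St (Suc t) ?w + A) \<le> R \<xi>"
      unfolding R_def using k by (simp add: mult_left_mono)
    show "0 \<le> k * (Vt (Suc t) ?w + St (Suc t) ?w + A)"
      using Vt_nonneg[OF w'] St_nonneg[OF w'] A k by simp
  qed
  have xX: "x \<in> X" using x by simp
  have gi: "integrable P (g x)" and gI: "(\<integral>\<xi>. g x \<xi> \<partial>P) = ?G" using facts(14)[OF xX] by auto
  have Neq: "N = (\<lambda>\<xi>. g x \<xi> \<bullet> u - ?G \<bullet> u)" unfolding N_def by (simp add: inner_diff_left)
  have i1: "integrable P (\<lambda>\<xi>. g x \<xi> \<bullet> u)" by (rule integrable_inner_left[OF gi])
  have i2: "integrable P (\<lambda>\<xi>. ?G \<bullet> u)" by (rule P.integrable_const)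
  have iN: "integrable P N" unfolding Neq by (rule Bochner_Integration.integrable_diff[OF i1 i2])
  have intN: "(\<integral>\<xi>. N \<xi> \<partial>P) = 0"
  proof -
    have "(\<integral>\<xi>. N \<xi> \<partial>P) = (\<integral>\<xi>. g x \<xi> \<bullet> u \<partial>P) - (\<integral>\<xi>. ?G \<bullet> u \<partial>P)"
      unfolding Neq by (rule Bochner_Integration.integral_diff[OF i1 i2])
    also have "(\<integral>\<xi>. g x \<xi> \<bullet> u \<partial>P) = ?G \<bullet> u"
      using integral_inner_left[of u P "g x"] gi gI by simp
    also have "(\<integral>\<xi>. ?G \<bullet> u \<partial>P) = ?G \<bullet> u"
      using P.prob_space by simp
    finally show ?thesis by simp
  qed
  have mg: "(\<lambda>\<xi>. g x \<xi> - ?G) \<in> borel_measurable P"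
    by (rule borel_measurable_diff[OF gmeas[OF xX] borel_measurable_const])
  have mD2: "D2 \<in> borel_measurable P"
    unfolding D2_def by (rule borel_measurable_power[OF borel_measurable_continuous_on[OF dn_cont[OF nrm] mg]])
  have nD2: "(\<integral>\<^sup>+\<xi>. ennreal (D2 \<xi>) \<partial>P) \<le> ennreal (\<sigma>\<^sup>2)" unfolding D2_def using facts(15)[OF xX] .
  have iD2: "integrable P D2"
  proof (rule integrableI_nonneg[OF mD2])
    show "AE \<xi> in P. 0 \<le> D2 \<xi>" by (rule AE_I2) (simp add: D2_def)
    show "(\<integral>\<^sup>+\<xi>. ennreal (D2 \<xi>) \<partial>P) < \<infinity>" by (rule le_less_trans[OF nD2]) simp
  qed
  have D2le: "(\<integral>\<xi>. D2 \<xi> \<partial>P) \<le> \<sigma>\<^sup>2"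
  proof -
    have "(\<integral>\<^sup>+\<xi>. ennreal (D2 \<xi>) \<partial>P) = ennreal (\<integral>\<xi>. D2 \<xi> \<partial>P)"
    proof (rule nn_integral_eq_integral[OF iD2])
      show "AE \<xi> in P. 0 \<le> D2 \<xi>" by (rule AE_I2) (simp add: D2_def)
    qed
    then have "ennreal (\<integral>\<xi>. D2 \<xi> \<partial>P) \<le> ennreal (\<sigma>\<^sup>2)" using nD2 by simp
    then show ?thesis by (simp add: ennreal_le_iff)
  qed
  have i3: "integrable P (\<lambda>\<xi>. C + (2 * L * e) * N \<xi>)"
    by (rule Bochner_Integration.integrable_add[OF P.integrable_const integrable_mult_right[OF iN]])
  have i4: "integrable P (\<lambda>\<xi>. (2 * L * e\<^sup>2) * D2 \<xi>)" by (rule integrable_mult_right[OF iD2])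
  have i5: "integrable P (\<lambda>\<xi>. C + (2 * L * e) * N \<xi> + (2 * L * e\<^sup>2) * D2 \<xi>)"
    by (rule Bochner_Integration.integrable_add[OF i3 i4])
  have iR: "integrable P R" unfolding R_def by (rule integrable_mult_right[OF i5])
  have intR: "(\<integral>\<xi>. R \<xi> \<partial>P) = k * (C + (2 * L * e\<^sup>2) * (\<integral>\<xi>. D2 \<xi> \<partial>P))"
  proof -
    have "(\<integral>\<xi>. R \<xi> \<partial>P) = k * (\<integral>\<xi>. C + (2 * L * e) * N \<xi> + (2 * L * e\<^sup>2) * D2 \<xi> \<partial>P)"
      unfolding R_def by (rule integral_mult_right_zero)
    also have "(\<integral>\<xi>. C + (2 * L * e) * N \<xi> + (2 * L * e\<^sup>2) * D2 \<xi> \<partial>P)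
        = (\<integral>\<xi>. C + (2 * L * e) * N \<xi> \<partial>P) + (\<integral>\<xi>. (2 * L * e\<^sup>2) * D2 \<xi> \<partial>P)"
      by (rule Bochner_Integration.integral_add[OF i3 i4])
    also have "(\<integral>\<xi>. C + (2 * L * e) * N \<xi> \<partial>P) = (\<integral>\<xi>. C \<partial>P) + (\<integral>\<xi>. (2 * L * e) * N \<xi> \<partial>P)"
      by (rule Bochner_Integration.integral_add[OF P.integrable_const integrable_mult_right[OF iN]])
    also have "(\<integral>\<xi>. C \<partial>P) = C" using P.prob_space by simp
    also have "(\<integral>\<xi>. (2 * L * e) * N \<xi> \<partial>P) = 0" using intN by (simp only: integral_mult_right_zero mult_zero_right)
    also have "(\<integral>\<xi>. (2 * L * e\<^sup>2) * D2 \<xi> \<partial>P) = (2 * L * e\<^sup>2) * (\<integral>\<xi>. D2 \<xi> \<partial>P)"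
      by (rule integral_mult_right_zero)
    finally show ?thesis by simp
  qed
  have "(\<integral>\<^sup>+\<xi>. ennreal (k * (Vt (Suc t) (w(t := \<xi>)) + St (Suc t) (w(t := \<xi>)) + A)) \<partial>P)
      \<le> (\<integral>\<^sup>+\<xi>. ennreal (R \<xi>) \<partial>P)"
    by (intro nn_integral_mono ennreal_leI ptw)
  also have "\<dots> = ennreal (\<integral>\<xi>. R \<xi> \<partial>P)"
  proof (rule nn_integral_eq_integral[OF iR])
    show "AE \<xi> in P. 0 \<le> R \<xi>"
    proof (rule AE_I2)
      fix \<xi> assume "\<xi> \<in> space P"
      then show "0 \<le> R \<xi>" using ptw ptw0 by (meson order_trans)
    qed
  qed
  also have "\<dots> \<le> ennreal (k * (C + (2 * L * e\<^sup>2) * \<sigma>\<^sup>2))"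
    unfolding intR using D2le k Lpos by (intro ennreal_leI mult_left_mono add_left_mono) auto
  also have "k * (C + (2 * L * e\<^sup>2) * \<sigma>\<^sup>2) = k * (Vt t w + St t w + A + 2 * L * (\<eta> t)\<^sup>2 * \<sigma>\<^sup>2)"
    unfolding C_def e_def by simp
  finally show ?thesis .
qed

end


context smd begin

definition "V0 = Mo x0 - \<Phi>s + 2 * L * \<eta> 0 * (\<Phi> x0 - \<Phi>s)"

lemma main_ind:
  assumes k: "0 < k"
  shows "\<forall>c\<ge>0. (\<integral>\<^sup>+w. ennreal (k * (Vt T w + St T w + c)) \<partial>\<Omega>)
      \<le> ennreal (k * (V0 + (\<Sum>s<T. 2 * L * (\<eta> s)\<^sup>2 * \<sigma>\<^sup>2) + c))"
proof (induction T)
  case 0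
  show ?case
  proof (intro allI impI)
    fix c :: real assume c: "0 \<le> c"
    have "(\<integral>\<^sup>+w. ennreal (k * (Vt 0 w + St 0 w + c)) \<partial>\<Omega>) = (\<integral>\<^sup>+w. ennreal (k * (V0 + c)) \<partial>\<Omega>)"
      by (intro nn_integral_cong) (simp add: Vt_def St_def V0_def facts(21))
    also have "\<dots> = ennreal (k * (V0 + c))"
      using prob_space.emeasure_space_1[OF PO] by simp
    finally show "(\<integral>\<^sup>+w. ennreal (k * (Vt 0 w + St 0 w + c)) \<partial>\<Omega>)
      \<le> ennreal (k * (V0 + (\<Sum>s<0. 2 * L * (\<eta> s)\<^sup>2 * \<sigma>\<^sup>2) + c))" by simp
  qed
next
  case (Suc T)
  show ?case
  proof (intro allI impI)
    fix c :: real assume c: "0 \<le> c"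
    let ?d = "2 * L * (\<eta> T)\<^sup>2 * \<sigma>\<^sup>2"
    have d0: "0 \<le> ?d" using Lpos by simp
    have "(\<integral>\<^sup>+w. ennreal (k * (Vt (Suc T) w + St (Suc T) w + c)) \<partial>\<Omega>)
       \<le> (\<integral>\<^sup>+w. (\<integral>\<^sup>+\<xi>. ennreal (k * (Vt (Suc T) (w(T := \<xi>)) + St (Suc T) (w(T := \<xi>)) + c)) \<partial>P) \<partial>\<Omega>)"
      by (rule pim_fun_upd_nn_le[OF PP])
    also have "\<dots> \<le> (\<integral>\<^sup>+w. ennreal (k * (Vt T w + St T w + (c + ?d))) \<partial>\<Omega>)"
    proof (rule nn_integral_mono)
      fix w assume w: "w \<in> space \<Omega>"
      show "(\<integral>\<^sup>+\<xi>. ennreal (k * (Vt (Suc T) (w(T := \<xi>)) + St (Suc T) (w(T := \<xi>)) + c)) \<partial>P)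
          \<le> ennreal (k * (Vt T w + St T w + (c + ?d)))"
        using step_int[OF w c k, of T] by (simp add: add.assoc)
    qed
    also have "\<dots> \<le> ennreal (k * (V0 + (\<Sum>s<T. 2 * L * (\<eta> s)\<^sup>2 * \<sigma>\<^sup>2) + (c + ?d)))"
      using Suc.IH c d0 by simp
    also have "\<dots> = ennreal (k * (V0 + (\<Sum>s<Suc T. 2 * L * (\<eta> s)\<^sup>2 * \<sigma>\<^sup>2) + c))"
      by (simp add: ac_simps)
    finally show "(\<integral>\<^sup>+w. ennreal (k * (Vt (Suc T) w + St (Suc T) w + c)) \<partial>\<Omega>)
       \<le> ennreal (k * (V0 + (\<Sum>s<Suc T. 2 * L * (\<eta> s)\<^sup>2 * \<sigma>\<^sup>2) + c))" .
  qed
qed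

lemma Phi_eq: "\<Phi> = (\<lambda>x. F x + r x)" by (rule ext) (simp add: \<Phi>_def)

lemma lam0_eq: "lambda0 X \<omega> g\<omega> F r L x0 = Mo x0 - \<Phi>s + \<Phi> x0 - \<Phi>s"
  by (simp add: lambda0_def Let_def Mo_def \<Phi>s_def Phi_eq)

lemma lam0_nonneg: "0 \<le> lambda0 X \<omega> g\<omega> F r L x0"
  using mo_ge[OF facts(19)] Phi_ge[of x0] facts(19) unfolding lam0_eq by auto

lemma V0_le: "V0 \<le> lambda0 X \<omega> g\<omega> F r L x0"
proof -
  have a: "0 \<le> \<Phi> x0 - \<Phi>s" using Phi_ge[of x0] facts(19) by auto
  have b: "2 * L * \<eta> 0 \<le> 1" using facts(18) Lpos by (simp add: field_simps)
  have "2 * L * \<eta> 0 * (\<Phi> x0 - \<Phi>s) \<le> \<Phi> x0 - \<Phi>s"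
    using mult_left_le_one_le[OF a _ b] Lpos eta_ok(1)[of 0] by simp
  then show ?thesis unfolding V0_def lam0_eq by simp
qed

lemma bound:
  assumes T: "1 \<le> T"
  shows "exp_fbe_output X \<omega> g\<omega> gradF r P L \<eta> xs T
     \<le> ennreal ((3 * lambda0 X \<omega> g\<omega> F r L x0 + 6 * L * \<sigma>\<^sup>2 * (\<Sum>t<T. (\<eta> t)\<^sup>2)) / (\<Sum>t<T. \<eta> t))"
proof -
  define E where "E = (\<Sum>t<T. \<eta> t)"
  have "\<eta> 0 \<le> E" unfolding E_def using T eta_ok(1) by (intro member_le_sum) (auto intro: less_imp_le)
  then have E: "0 < E" using eta_ok(1)[of 0] by linarith
  define k where "k = 3 / E"
  have k: "0 < k" using E k_def by simp
  have "exp_fbe_output X \<omega> g\<omega> gradF r P L \<eta> xs T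
      = (\<Sum>t<T. ennreal (\<eta> t / E) * (\<integral>\<^sup>+w. ennreal (Dfb (xs t w)) \<partial>\<Omega>))"
    by (simp add: exp_fbe_output_def Dfb_def E_def)
  also have "\<dots> \<le> (\<Sum>t<T. (\<integral>\<^sup>+w. ennreal (\<eta> t / E) * ennreal (Dfb (xs t w)) \<partial>\<Omega>))"
    by (intro sum_mono nn_lower_cmult)
  also have "\<dots> \<le> (\<integral>\<^sup>+w. (\<Sum>t<T. ennreal (\<eta> t / E) * ennreal (Dfb (xs t w))) \<partial>\<Omega>)"
    by (rule nn_lower_sum)
  also have "\<dots> \<le> (\<integral>\<^sup>+w. ennreal (k * (Vt T w + St T w + 0)) \<partial>\<Omega>)"
  proof (rule nn_integral_mono)
    fix w assume w: "w \<in> space \<Omega>"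
    have nn: "0 \<le> Dfb (xs t w)" for t using fb_bounds(1)[OF xs_in[OF w]] .
    have "(\<Sum>t<T. ennreal (\<eta> t / E) * ennreal (Dfb (xs t w))) = (\<Sum>t<T. ennreal (\<eta> t / E * Dfb (xs t w)))"
      using nn eta_ok(1) E by (intro sum.cong refl ennreal_mult[symmetric]) (auto intro!: divide_nonneg_nonneg mult_nonneg_nonneg intro: less_imp_le)
    also have "\<dots> = ennreal (\<Sum>t<T. \<eta> t / E * Dfb (xs t w))"
      using nn eta_ok(1) E by (intro sum_ennreal) (auto intro!: divide_nonneg_nonneg mult_nonneg_nonneg intro: less_imp_le)
    also have "(\<Sum>t<T. \<eta> t / E * Dfb (xs t w)) = k * St T w"
      unfolding k_def St_def sum_distrib_left by (intro sum.cong) auto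
    also have "k * St T w \<le> k * (Vt T w + St T w + 0)"
      using Vt_nonneg[OF w] k by simp
    finally show "(\<Sum>t<T. ennreal (\<eta> t / E) * ennreal (Dfb (xs t w))) \<le> ennreal (k * (Vt T w + St T w + 0))"
      by (simp add: ennreal_leI)
  qed
  also have "\<dots> \<le> ennreal (k * (V0 + (\<Sum>s<T. 2 * L * (\<eta> s)\<^sup>2 * \<sigma>\<^sup>2) + 0))"
    using spec[OF main_ind[OF k, of T], of 0] by simp
  also have "\<dots> \<le> ennreal ((3 * lambda0 X \<omega> g\<omega> F r L x0 + 6 * L * \<sigma>\<^sup>2 * (\<Sum>t<T. (\<eta> t)\<^sup>2)) / E)"
  proof (rule ennreal_leI)
    have s: "(\<Sum>s<T. 2 * L * (\<eta> s)\<^sup>2 * \<sigma>\<^sup>2) = 2 * L * \<sigma>\<^sup>2 * (\<Sum>t<T. (\<eta> t)\<^sup>2)"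
      by (simp add: sum_distrib_left sum_distrib_right algebra_simps)
    have "k * (V0 + (\<Sum>s<T. 2 * L * (\<eta> s)\<^sup>2 * \<sigma>\<^sup>2) + 0) \<le> k * (lambda0 X \<omega> g\<omega> F r L x0 + 2 * L * \<sigma>\<^sup>2 * (\<Sum>t<T. (\<eta> t)\<^sup>2))"
      using V0_le k unfolding s by simp
    also have "\<dots> = (3 * lambda0 X \<omega> g\<omega> F r L x0 + 6 * L * \<sigma>\<^sup>2 * (\<Sum>t<T. (\<eta> t)\<^sup>2)) / E"
      unfolding k_def using E by (simp add: field_simps)
    finally show "k * (V0 + (\<Sum>s<T. 2 * L * (\<eta> s)\<^sup>2 * \<sigma>\<^sup>2) + 0) \<le> \<dots>" .
  qed
  finally show ?thesis unfolding E_def .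
qed

end

lemma rate_arith:
  fixes lam L \<sigma> e :: real and T :: nat
  assumes T: "1 \<le> T" and L: "0 < L" and lam: "0 \<le> lam" and e0: "0 < e"
    and e: "e = (if \<sigma> = 0 then 1 / (2 * L) else min (1 / (2 * L)) (sqrt (lam / (\<sigma>\<^sup>2 * L * real T))))"
  shows "(3 * lam + 6 * L * \<sigma>\<^sup>2 * (real T * e\<^sup>2)) / (real T * e)
     \<le> 9 * (L * lam / real T + sqrt (\<sigma>\<^sup>2 * L * lam / real T))"
proof -
  have Tp: "0 < real T" using T by simp
  define Q where "Q = sqrt (\<sigma>\<^sup>2 * L * lam / real T)"
  have Q0: "0 \<le> Q" unfolding Q_def using L lam Tp by simp
  have split: "(3 * lam + 6 * L * \<sigma>\<^sup>2 * (real T * e\<^sup>2)) / (real T * e) = 3 * lam / (real T * e) + 6 * L * \<sigma>\<^sup>2 * e"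
    using Tp e0 by (simp add: field_simps power2_eq_square)
  show ?thesis
  proof (cases "\<sigma> = 0")
    case True
    then have "e = 1 / (2 * L)" using e by simp
    moreover have "3 * lam / (real T * (1 / (2 * L))) = 6 * L * lam / real T" using L Tp by (simp add: field_simps)
    ultimately have "3 * lam / (real T * e) = 6 * L * lam / real T" by simp
    moreover have "6 * L * lam / real T \<le> 9 * (L * lam / real T)"
    proof -
      have "6 * (L * lam) \<le> 9 * (L * lam)" using L lam by simp
      then have "6 * (L * lam) / real T \<le> 9 * (L * lam) / real T" using Tp by (intro divide_right_mono) auto
      then show ?thesis by simp
    qed
    ultimately show ?thesis unfolding split using True Q0 L lam Tp
      by (simp add: Q_def)
  next
    case False
    define s where "s = sqrt (lam / (\<sigma>\<^sup>2 * L * real T))"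
    have es: "e = min (1 / (2 * L)) s" using e False s_def by simp
    have s0: "0 < s" using es e0 by simp
    have sQ: "s * Q = lam / real T"
    proof -
      have "s * Q = sqrt (lam / (\<sigma>\<^sup>2 * L * real T) * (\<sigma>\<^sup>2 * L * lam / real T))"
        unfolding s_def Q_def by (rule real_sqrt_mult[symmetric])
      also have "lam / (\<sigma>\<^sup>2 * L * real T) * (\<sigma>\<^sup>2 * L * lam / real T) = (lam / real T)\<^sup>2"
        using False L Tp by (simp add: field_simps power2_eq_square)
      finally show ?thesis using lam Tp by simp
    qed
    have sL: "L * \<sigma>\<^sup>2 * s = Q"
    proof -
      have "L * \<sigma>\<^sup>2 * s = sqrt ((L * \<sigma>\<^sup>2)\<^sup>2 * (lam / (\<sigma>\<^sup>2 * L * real T)))"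
        unfolding real_sqrt_mult s_def using L by simp
      also have "(L * \<sigma>\<^sup>2)\<^sup>2 * (lam / (\<sigma>\<^sup>2 * L * real T)) = \<sigma>\<^sup>2 * L * lam / real T"
        using False L Tp by (simp add: field_simps power2_eq_square)
      finally show ?thesis unfolding Q_def .
    qed
    have a: "6 * L * \<sigma>\<^sup>2 * e \<le> 6 * Q"
    proof -
      have "L * \<sigma>\<^sup>2 * e \<le> L * \<sigma>\<^sup>2 * s" using es L by (intro mult_left_mono) auto
      then show ?thesis using sL by simp
    qed
    have b: "3 * lam / (real T * e) \<le> 6 * L * lam / real T + 3 * Q"
    proof (cases "1 / (2 * L) \<le> s")
      case True
      then have "e = 1 / (2 * L)" using es by simp
      moreover have "3 * lam / (real T * (1 / (2 * L))) = 6 * L * lam / real T" using L Tp by (simp add: field_simps)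
    ultimately have "3 * lam / (real T * e) = 6 * L * lam / real T" by simp
      then show ?thesis using Q0 by simp
    next
      case False
      then have "e = s" using es by simp
      then have "3 * lam / (real T * e) = 3 * Q" using sQ s0 Tp by (simp add: field_simps)
      then show ?thesis using L lam Tp by (simp add: divide_nonneg_nonneg)
    qed
    have W: "0 \<le> L * lam / real T" using L lam Tp by simp
    have b': "3 * lam / (real T * e) \<le> 6 * (L * lam / real T) + 3 * Q" using b by simp
    have gen: "p + q \<le> 9 * (w + Q')" if "q \<le> 6 * Q'" "p \<le> 6 * w + 3 * Q'" "0 \<le> w" for p :: real and q :: real and w :: real and Q' :: real
      using that by (simp add: algebra_simps)
    show ?thesis unfolding split Q_def[symmetric] by (rule gen[OF a b' W])
  qed
qed

theorem theorem1:
  shows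
  "(\<forall>(X::'a::euclidean_space set) S nrm \<omega> g\<omega> f F gradF g (P::'b measure) r L \<sigma> x0 \<eta> xs (T::nat).
      SMD_instance X S nrm \<omega> g\<omega> f F gradF g P r L \<sigma> x0 \<eta> xs \<and> 1 \<le> T \<longrightarrow>
      exp_fbe_output X \<omega> g\<omega> gradF r P L \<eta> xs T
        \<le> ennreal ((3 * lambda0 X \<omega> g\<omega> F r L x0 + 6 * L * \<sigma>\<^sup>2 * (\<Sum>t<T. (\<eta> t)\<^sup>2))
                   / (\<Sum>t<T. \<eta> t)))
   \<and> (\<exists>C::real. C > 0 \<and>
      (\<forall>(X::'a set) S nrm \<omega> g\<omega> f F gradF g (P::'b measure) r L \<sigma> x0 \<eta> xs (T::nat).
         SMD_instance X S nrm \<omega> g\<omega> f F gradF g P r L \<sigma> x0 \<eta> xs \<and> 1 \<le> T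
         \<and> (\<forall>t. \<eta> t = (if \<sigma> = 0 then 1 / (2 * L)
                        else min (1 / (2 * L))
                               (sqrt (lambda0 X \<omega> g\<omega> F r L x0 / (\<sigma>\<^sup>2 * L * real T))))) \<longrightarrow>
         exp_fbe_output X \<omega> g\<omega> gradF r P L \<eta> xs T
           \<le> ennreal (C * (L * lambda0 X \<omega> g\<omega> F r L x0 / real T
                          + sqrt (\<sigma>\<^sup>2 * L * lambda0 X \<omega> g\<omega> F r L x0 / real T)))))"
proof (intro conjI allI impI)
  fix X :: "'a::euclidean_space set" and S nrm \<omega> g\<omega> and f :: "'a \<Rightarrow> 'b \<Rightarrow> real" and F gradF g
    and P :: "'b measure" and r L \<sigma> x0 \<eta> xs and T :: nat
  assume h: "SMD_instance X S nrm \<omega> g\<omega> f F gradF g P r L \<sigma> x0 \<eta> xs \<and> 1 \<le> T"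
  interpret smd X S nrm \<omega> g\<omega> f F gradF g P r L \<sigma> x0 \<eta> xs by (rule smd.intro) (rule conjunct1[OF h])
  show "exp_fbe_output X \<omega> g\<omega> gradF r P L \<eta> xs T
        \<le> ennreal ((3 * lambda0 X \<omega> g\<omega> F r L x0 + 6 * L * \<sigma>\<^sup>2 * (\<Sum>t<T. (\<eta> t)\<^sup>2))
                   / (\<Sum>t<T. \<eta> t))"
    by (rule bound) (rule conjunct2[OF h])
next
  show "\<exists>C::real. C > 0 \<and>
      (\<forall>(X::'a set) S nrm \<omega> g\<omega> f F gradF g (P::'b measure) r L \<sigma> x0 \<eta> xs (T::nat).
         SMD_instance X S nrm \<omega> g\<omega> f F gradF g P r L \<sigma> x0 \<eta> xs \<and> 1 \<le> T
         \<and> (\<forall>t. \<eta> t = (if \<sigma> = 0 then 1 / (2 * L)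
                        else min (1 / (2 * L))
                               (sqrt (lambda0 X \<omega> g\<omega> F r L x0 / (\<sigma>\<^sup>2 * L * real T))))) \<longrightarrow>
         exp_fbe_output X \<omega> g\<omega> gradF r P L \<eta> xs T
           \<le> ennreal (C * (L * lambda0 X \<omega> g\<omega> F r L x0 / real T
                          + sqrt (\<sigma>\<^sup>2 * L * lambda0 X \<omega> g\<omega> F r L x0 / real T))))"
  proof (intro exI[of _ 9] conjI allI impI)
    fix X :: "'a::euclidean_space set" and S nrm \<omega> g\<omega> and f :: "'a \<Rightarrow> 'b \<Rightarrow> real" and F gradF g
      and P :: "'b measure" and r L \<sigma> x0 \<eta> xs and T :: nat
    assume h: "SMD_instance X S nrm \<omega> g\<omega> f F gradF g P r L \<sigma> x0 \<eta> xs \<and> 1 \<le> T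
         \<and> (\<forall>t. \<eta> t = (if \<sigma> = 0 then 1 / (2 * L)
                        else min (1 / (2 * L))
                               (sqrt (lambda0 X \<omega> g\<omega> F r L x0 / (\<sigma>\<^sup>2 * L * real T)))))"
    interpret smd X S nrm \<omega> g\<omega> f F gradF g P r L \<sigma> x0 \<eta> xs by (rule smd.intro) (rule conjunct1[OF h])
    let ?lam = "lambda0 X \<omega> g\<omega> F r L x0"
    define e where "e = (if \<sigma> = 0 then 1 / (2 * L) else min (1 / (2 * L)) (sqrt (?lam / (\<sigma>\<^sup>2 * L * real T))))"
    have et0: "\<forall>t. \<eta> t = e" unfolding e_def by (rule conjunct2[OF conjunct2[OF h]])
    have et: "\<eta> t = e" for t using et0 by blast
    have T: "1 \<le> T" by (rule conjunct1[OF conjunct2[OF h]])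
    have e0: "0 < e" using eta_ok(1)[of 0] et by simp
    have s1: "(\<Sum>t<T. \<eta> t) = real T * e" using et by simp
    have s2: "(\<Sum>t<T. (\<eta> t)\<^sup>2) = real T * e\<^sup>2" using et by simp
    have "exp_fbe_output X \<omega> g\<omega> gradF r P L \<eta> xs T
        \<le> ennreal ((3 * ?lam + 6 * L * \<sigma>\<^sup>2 * (real T * e\<^sup>2)) / (real T * e))"
      using bound[OF T] unfolding s1 s2 .
    also have "\<dots> \<le> ennreal (9 * (L * ?lam / real T + sqrt (\<sigma>\<^sup>2 * L * ?lam / real T)))"
      by (rule ennreal_leI, rule rate_arith[OF T Lpos lam0_nonneg e0 e_def])
    finally show "exp_fbe_output X \<omega> g\<omega> gradF r P L \<eta> xs T
        \<le> ennreal (9 * (L * ?lam / real T + sqrt (\<sigma>\<^sup>2 * L * ?lam / real T)))" .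
  qed simp
qed


end
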